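(* Let $T_*>\tau_D$ and $\mu_0\in(0,1)$ be constants. There exist a continuous function $\xi_{\mu_0}:[0,T_*]\to(0,1]$ and a constant $\gamma_2>0$, depending only on $\mu_0,n,a_*,a^*,\tau_D,T_*$, with $\xi_{\mu_0}(0)=1$, $\xi_{\mu_0}$ strictly decreasing on $[0,\tau_D]$, strictly increasing on $[\tau_D,T_*]$ and $\xi_{\mu_0}(T_* )<1$, such that the following holds. For any trajectory of system (5) with $\|z\|_\infty<\infty$, any $t_0\ge 0$, any constant $d_0>0$, and any $i,m\in\mathcal V_F$ such that the arc $(i,m)$ belongs to $\mathcal E_{\sigma(t)}$ for all $t\in[t_0,t_0+\tau_D)$ and $$|x_i(t)|_{\mathcal L(y(t))}\le\mu_0|x(t_0)|_{\mathcal L(y(t_0))}+d_0\quad\text{for all }t\in[t_0,t_0+\tau_D),$$ we have $$|x_m(t)|_{\mathcal L(y(t))}\le\xi_{\mu_0}(t-t_0)\,|x(t_0)|_{\mathcal L(y(t_0))}+\gamma_2\|z\|_\infty+d_0\quad\text{for all }t\in[t_0,t_0+T_*].$$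
   Context: Standing setup. Fix integers $n\ge 2$, $k\ge 1$, $d\ge 1$. The follower set is $\mathcal V_F=\{1,\dots,n\}$ and the leader set is $\mathcal V_L=\{\hat 1,\dots,\hat k\}$ (disjoint from $\mathcal V_F$); $\mathcal V=\mathcal V_F\cup\mathcal V_L$. The interaction topology is a time-varying digraph $\mathcal G_{\sigma(t)}=(\mathcal V,\mathcal E_{\sigma(t)})$, where $\sigma:[0,\infty)\to\mathcal P$ is a piecewise constant switching signal taking values in a finite set $\mathcal P$ of digraphs on $\mathcal V$; no arc of any of these digraphs enters a leader. An arc $(j,i)$ means that $i$ receives information from $j$. Dwell-time assumption: any two consecutive switching instants of $\sigma$ are separated by at least $\tau_D>0$. For $i\in\mathcal V_F$, $N_i(\sigma(t))=\{j\in\mathcal V_F:(j,i)\in\mathcal E_{\sigma(t)}\}$ and $L_i(\sigma(t))=\{j\in\mathcal V_L:(j,i)\in\mathcal E_{\sigma(t)}\}$. System (5): $\dot y_i=u_i(y,t)$ for $i=1,\dots,k$, and $\dot x_i=\sum_{j\in N_i(\sigma(t))}a_{ij}(x,y,t)(x_j-x_i)+\sum_{j\in L_i(\sigma(t))}b_{ij}(x,y,t)(y_j-x_i)+w_i(t)$ for $i=1,\dots,n$, where $x_i,y_j\in\mathbb R^d$, $x=(x_1,\dots,x_n)$, $y=(y_1,\dots,y_k)$; each $u_i(y,t)$ is continuous in $y$ and piecewise continuous in $t$; each $w_i$ is continuous; the weights $a_{ij},b_{ij}$ are continuous and satisfy $a_*\le a_{ij}(x,y,t)\le a^*$, $b_{ij}(x,y,t)\ge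 b_*$ for all $x,y,t$, with constants $0<a_*\le a^*$, $b_*>0$. Along a trajectory, $z(t)=(u_1(y(t),t),\dots,u_k(y(t),t),w_1(t),\dots,w_n(t))\in\mathbb R^{(n+k)d}$ and $\|z\|_\infty=\sup_{t\ge0}|z(t)|$. Set notation: $|\cdot|$ is the Euclidean norm; for a closed convex $K\subset\mathbb R^d$, $|v|_K=\inf_{p\in K}|v-p|$; $\mathcal L(y(t))=\mathrm{co}\{y_1(t),\dots,y_k(t)\}$ (convex hull); $|x(t)|_{\mathcal L(y(t))}=\max_{i\in\mathcal V_F}|x_i(t)|_{\mathcal L(y(t))}$. *)

theory Defs
  imports "HOL-Analysis.Analysis"
begin

text \<open>Points of R^d are represented as functions nat => real vanishing at
coordinates c >= d (so that the dimension d can be quantified inside the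
statement). Followers are indexed 1..n, leaders 1..k.\<close>

datatype vtx = Fv nat | Lv nat

type_synonym pt = "nat \<Rightarrow> real"
type_synonym state = "nat \<Rightarrow> nat \<Rightarrow> real"
type_synonym digraph = "(vtx \<times> vtx) set"

definition vec_space :: "nat \<Rightarrow> pt set" where
  "vec_space d = {v. \<forall>c\<ge>d. v c = 0}"

definition state_space :: "nat \<Rightarrow> nat \<Rightarrow> state set" where
  "state_space N d = {X. \<forall>i c. (i \<notin> {1..N} \<or> d \<le> c) \<longrightarrow> X i c = 0}"

definition eucl :: "nat \<Rightarrow> pt \<Rightarrow> real" where
  "eucl d v = sqrt (\<Sum>c<d. (v c)\<^sup>2)"

definition conv_pts :: "nat \<Rightarrow> state \<Rightarrow> pt set" where
  "conv_pts k Y = {p. \<exists>l::nat\<Rightarrow>real. (\<forall>j\<in>{1..k}. 0 \<le> l j) \<and> (\<Sum>j=1..k. l j) = 1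
                        \<and> p = (\<lambda>c. \<Sum>j=1..k. l j * Y j c)}"

definition set_dist :: "nat \<Rightarrow> pt \<Rightarrow> pt set \<Rightarrow> real" where
  "set_dist d v K = Inf ((\<lambda>p. eucl d (\<lambda>c. v c - p c)) ` K)"

definition st :: "nat \<Rightarrow> (nat \<Rightarrow> real \<Rightarrow> pt) \<Rightarrow> real \<Rightarrow> state" where
  "st N x t = (\<lambda>i. if i \<in> {1..N} then x i t else (\<lambda>c. 0))"

definition fdist :: "nat \<Rightarrow> nat \<Rightarrow> (nat \<Rightarrow> real \<Rightarrow> pt) \<Rightarrow> (nat \<Rightarrow> real \<Rightarrow> pt) \<Rightarrow> nat \<Rightarrow> real \<Rightarrow> real" where
  "fdist k d x y i t = set_dist d (x i t) (conv_pts k (st k y t))"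

definition hdist :: "nat \<Rightarrow> nat \<Rightarrow> nat \<Rightarrow> (nat \<Rightarrow> real \<Rightarrow> pt) \<Rightarrow> (nat \<Rightarrow> real \<Rightarrow> pt) \<Rightarrow> real \<Rightarrow> real" where
  "hdist n k d x y t = Max ((\<lambda>i. fdist k d x y i t) ` {1..n})"

text \<open>Piecewise constant switching signal with dwell time tauD: switching
instants Sw in (0,inf), pairwise separated by at least tauD, and sigma constant
between consecutive instants (right-continuous convention).\<close>
definition dwell_switching :: "(real \<Rightarrow> digraph) \<Rightarrow> real \<Rightarrow> bool" where
  "dwell_switching \<sigma> \<tau>D \<longleftrightarrow> (\<exists>Sw. Sw \<subseteq> {0<..}
     \<and> (\<forall>s\<in>Sw. \<forall>s'\<in>Sw. s \<noteq> s' \<longrightarrow> \<tau>D \<le> \<bar>s - s'\<bar>)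
     \<and> (\<forall>t t'. 0 \<le> t \<and> t \<le> t' \<and> (\<forall>s\<in>Sw. \<not> (t < s \<and> s \<le> t')) \<longrightarrow> \<sigma> t = \<sigma> t'))"

definition admissible_topology :: "nat \<Rightarrow> nat \<Rightarrow> (real \<Rightarrow> digraph) \<Rightarrow> bool" where
  "admissible_topology n k \<sigma> \<longleftrightarrow> finite (\<sigma> ` {0..})
     \<and> (\<forall>t\<ge>0. \<sigma> t \<subseteq> (Fv ` {1..n} \<union> Lv ` {1..k}) \<times> (Fv ` {1..n} \<union> Lv ` {1..k})
              \<and> (\<forall>v j. (v, Lv j) \<notin> \<sigma> t))"

definition Nset :: "nat \<Rightarrow> (real \<Rightarrow> digraph) \<Rightarrow> nat \<Rightarrow> real \<Rightarrow> nat set" where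
  "Nset n \<sigma> i t = {j\<in>{1..n}. (Fv j, Fv i) \<in> \<sigma> t}"

definition Lset :: "nat \<Rightarrow> (real \<Rightarrow> digraph) \<Rightarrow> nat \<Rightarrow> real \<Rightarrow> nat set" where
  "Lset k \<sigma> i t = {j\<in>{1..k}. (Lv j, Fv i) \<in> \<sigma> t}"

definition pw_cont :: "(real \<Rightarrow> pt) \<Rightarrow> bool" where
  "pw_cont f \<longleftrightarrow> (\<forall>T. \<exists>D. finite D \<and>
      (\<forall>t\<in>{0..T} - D. continuous (at t within {0..}) f)
    \<and> (\<forall>t\<in>D. (t > 0 \<longrightarrow> (\<exists>l. (f \<longlongrightarrow> l) (at_left t))) \<and> (\<exists>l. (f \<longlongrightarrow> l) (at_right t))))"

definition znorm :: "nat \<Rightarrow> nat \<Rightarrow> nat \<Rightarrow> (nat \<Rightarrow> state \<Rightarrow> real \<Rightarrow> pt) \<Rightarrow> (nat \<Rightarrow> real \<Rightarrow> pt)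
                      \<Rightarrow> (nat \<Rightarrow> real \<Rightarrow> pt) \<Rightarrow> real \<Rightarrow> real" where
  "znorm n k d U W y t = sqrt ((\<Sum>i=1..k. (eucl d (U i (st k y t) t))\<^sup>2) + (\<Sum>i=1..n. (eucl d (W i t))\<^sup>2))"

definition traj5 :: "nat \<Rightarrow> nat \<Rightarrow> nat \<Rightarrow> real \<Rightarrow> real \<Rightarrow> real \<Rightarrow> real \<Rightarrow> (real \<Rightarrow> digraph)
    \<Rightarrow> (nat \<Rightarrow> nat \<Rightarrow> state \<Rightarrow> state \<Rightarrow> real \<Rightarrow> real) \<Rightarrow> (nat \<Rightarrow> nat \<Rightarrow> state \<Rightarrow> state \<Rightarrow> real \<Rightarrow> real)
    \<Rightarrow> (nat \<Rightarrow> state \<Rightarrow> real \<Rightarrow> pt) \<Rightarrow> (nat \<Rightarrow> real \<Rightarrow> pt)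
    \<Rightarrow> (nat \<Rightarrow> real \<Rightarrow> pt) \<Rightarrow> (nat \<Rightarrow> real \<Rightarrow> pt) \<Rightarrow> bool" where
  "traj5 n k d \<tau>D a_lo a_hi b_lo \<sigma> a b U W x y \<longleftrightarrow>
     dwell_switching \<sigma> \<tau>D \<and> admissible_topology n k \<sigma>
   \<and> (\<forall>i\<in>{1..n}. \<forall>j\<in>{1..n}. (\<forall>X Y t. a_lo \<le> a i j X Y t \<and> a i j X Y t \<le> a_hi)
        \<and> continuous_on (state_space n d \<times> state_space k d \<times> UNIV) (\<lambda>(X, Y, t). a i j X Y t))
   \<and> (\<forall>i\<in>{1..n}. \<forall>j\<in>{1..k}. (\<forall>X Y t. b_lo \<le> b i j X Y t)
        \<and> continuous_on (state_space n d \<times> state_space k d \<times> UNIV) (\<lambda>(X, Y, t). b i j X Y t))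
   \<and> (\<forall>i\<in>{1..k}. (\<forall>Y t. U i Y t \<in> vec_space d)
        \<and> (\<forall>t. continuous_on (state_space k d) (\<lambda>Y. U i Y t))
        \<and> (\<forall>Y\<in>state_space k d. pw_cont (\<lambda>t. U i Y t)))
   \<and> (\<forall>i\<in>{1..n}. (\<forall>t. W i t \<in> vec_space d) \<and> continuous_on {0..} (W i))
   \<and> (\<forall>i\<in>{1..n}. \<forall>t\<ge>0. x i t \<in> vec_space d)
   \<and> (\<forall>i\<in>{1..k}. \<forall>t\<ge>0. y i t \<in> vec_space d)
   \<and> (\<exists>E. (\<forall>T. finite (E \<inter> {0..T}))
      \<and> (\<forall>c<d. (\<forall>i\<in>{1..n}. continuous_on {0..} (\<lambda>s. x i s c))
             \<and> (\<forall>i\<in>{1..k}. continuous_on {0..} (\<lambda>s. y i s c)))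
      \<and> (\<forall>t. t > 0 \<and> t \<notin> E \<longrightarrow> (\<forall>c<d.
           (\<forall>i\<in>{1..k}. ((\<lambda>s. y i s c) has_real_derivative U i (st k y t) t c) (at t))
         \<and> (\<forall>i\<in>{1..n}. ((\<lambda>s. x i s c) has_real_derivative
               (\<Sum>j\<in>Nset n \<sigma> i t. a i j (st n x t) (st k y t) t * (x j t c - x i t c))
             + (\<Sum>j\<in>Lset k \<sigma> i t. b i j (st n x t) (st k y t) t * (y j t c - x i t c))
             + W i t c) (at t)))))"

end

theory Submission
  imports Defs
begin


lemma eucl_L2: "eucl d v = L2_set v {..<d}"
  by (simp add: eucl_def L2_set_def)

lemma eucl_nonneg: "0 \<le> eucl d v"
  by (simp add: eucl_L2)

lemma eucl_triangle: "eucl d (\<lambda>c. u c + v c) \<le> eucl d u + eucl d v"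
  unfolding eucl_L2 by (rule L2_set_triangle_ineq)

lemma eucl_scale: "eucl d (\<lambda>c. r * v c) = \<bar>r\<bar> * eucl d v"
proof -
  have "eucl d (\<lambda>c. r * v c) = sqrt (r^2 * (\<Sum>c<d. (v c)\<^sup>2))"
    by (simp add: eucl_def power_mult_distrib sum_distrib_left)
  also have "\<dots> = \<bar>r\<bar> * eucl d v" by (simp add: eucl_def real_sqrt_mult)
  finally show ?thesis .
qed

lemma eucl_sum: "finite I \<Longrightarrow> eucl d (\<lambda>c. \<Sum>i\<in>I. f i c) \<le> (\<Sum>i\<in>I. eucl d (f i))"
proof (induction I rule: finite_induct)
  case empty then show ?case by (simp add: eucl_def)
next
  case (insert a I)
  have "eucl d (\<lambda>c. \<Sum>i\<in>insert a I. f i c) = eucl d (\<lambda>c. f a c + (\<Sum>i\<in>I. f i c))"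
    using insert by simp
  also have "\<dots> \<le> eucl d (f a) + eucl d (\<lambda>c. \<Sum>i\<in>I. f i c)"
    using eucl_triangle[of d "f a"] by simp
  also have "\<dots> \<le> eucl d (f a) + (\<Sum>i\<in>I. eucl d (f i))" using insert by simp
  finally show ?case using insert by simp
qed

lemma eucl_le_sum_abs: "eucl d v \<le> (\<Sum>c<d. \<bar>v c\<bar>)"
  unfolding eucl_L2 by (rule L2_set_le_sum_abs)

lemma eucl_sym: "eucl d (\<lambda>c. u c - v c) = eucl d (\<lambda>c. v c - u c)"
  unfolding eucl_def by (simp add: power2_commute)

lemma eucl_zero: "eucl d (\<lambda>c. 0) = 0"
  by (simp add: eucl_def)

lemma eucl_tri3: "eucl d (\<lambda>c. u c - w c) \<le> eucl d (\<lambda>c. u c - v c) + eucl d (\<lambda>c. v c - w c)"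
  using eucl_triangle[of d "\<lambda>c. u c - v c" "\<lambda>c. v c - w c"] by simp

lemma Y_in_conv: "j \<in> {1..k} \<Longrightarrow> Y j \<in> conv_pts k Y"
proof -
  assume j: "j \<in> {1..k}"
  let ?l = "\<lambda>i. if i = j then 1 else (0::real)"
  have "(\<Sum>i=1..k. ?l i) = 1" using j by (simp add: sum.delta)
  moreover have "Y j = (\<lambda>c. \<Sum>i=1..k. ?l i * Y i c)"
  proof
    fix c
    have "(\<Sum>i=1..k. ?l i * Y i c) = (\<Sum>i=1..k. if i = j then Y i c else 0)"
      by (rule sum.cong) auto
    then show "Y j c = (\<Sum>i=1..k. ?l i * Y i c)" using j by (simp add: sum.delta)
  qed
  ultimately show ?thesis unfolding conv_pts_def by (intro CollectI exI[of _ ?l]) auto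
qed

lemma conv_ne: "1 \<le> k \<Longrightarrow> conv_pts k Y \<noteq> {}"
  using Y_in_conv[of 1 k Y] by auto

lemma sd_bdd: "bdd_below ((\<lambda>p. eucl d (\<lambda>c. v c - p c)) ` K)"
  by (rule bdd_belowI[of _ 0]) (auto simp: eucl_nonneg)

lemma sd_nonneg: "K \<noteq> {} \<Longrightarrow> 0 \<le> set_dist d v K"
  unfolding set_dist_def by (rule cInf_greatest) (auto simp: eucl_nonneg)

lemma sd_le: "p \<in> K \<Longrightarrow> set_dist d v K \<le> eucl d (\<lambda>c. v c - p c)"
  unfolding set_dist_def by (rule cInf_lower) (auto intro: sd_bdd)

lemma sd_approx: "K \<noteq> {} \<Longrightarrow> 0 < e \<Longrightarrow> \<exists>p\<in>K. eucl d (\<lambda>c. v c - p c) < set_dist d v K + e"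
proof -
  assume K: "K \<noteq> {}" and e: "0 < e"
  have "Inf ((\<lambda>p. eucl d (\<lambda>c. v c - p c)) ` K) < set_dist d v K + e"
    using e by (simp add: set_dist_def)
  then show ?thesis using K by (subst (asm) cInf_less_iff) (auto intro: sd_bdd)
qed

lemma sd_lip: "K \<noteq> {} \<Longrightarrow> set_dist d v K \<le> set_dist d w K + eucl d (\<lambda>c. v c - w c)"
proof (rule field_le_epsilon)
  fix e :: real assume K: "K \<noteq> {}" and e: "0 < e"
  obtain p where p: "p \<in> K" "eucl d (\<lambda>c. w c - p c) < set_dist d w K + e"
    using sd_approx[OF K e] by blast
  have "set_dist d v K \<le> eucl d (\<lambda>c. v c - p c)" by (rule sd_le[OF p(1)])
  also have "\<dots> \<le> eucl d (\<lambda>c. v c - w c) + eucl d (\<lambda>c. w c - p c)" by (rule eucl_tri3)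
  finally show "set_dist d v K \<le> set_dist d w K + eucl d (\<lambda>c. v c - w c) + e" using p(2) by simp
qed

lemma sd_Y: "j \<in> {1..k} \<Longrightarrow> set_dist d (Y j) (conv_pts k Y) = 0"
proof -
  assume j: "j \<in> {1..k}"
  have "set_dist d (Y j) (conv_pts k Y) \<le> eucl d (\<lambda>c. Y j c - Y j c)"
    by (rule sd_le[OF Y_in_conv[OF j]])
  moreover have "0 \<le> set_dist d (Y j) (conv_pts k Y)"
    by (rule sd_nonneg) (use Y_in_conv[OF j] in auto)
  ultimately show ?thesis by (simp add: eucl_zero)
qed

lemma sd_hull_move:
  assumes k: "1 \<le> k" and B: "\<forall>j\<in>{1..k}. eucl d (\<lambda>c. Y' j c - Y j c) \<le> B"
  shows "set_dist d v (conv_pts k Y') \<le> set_dist d v (conv_pts k Y) + B"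
proof (rule field_le_epsilon)
  fix e :: real assume e: "0 < e"
  obtain p where p: "p \<in> conv_pts k Y" "eucl d (\<lambda>c. v c - p c) < set_dist d v (conv_pts k Y) + e"
    using sd_approx[OF conv_ne[OF k] e] by blast
  then obtain l where l: "\<forall>j\<in>{1..k}. 0 \<le> l j" "(\<Sum>j=1..k. l j) = 1" "p = (\<lambda>c. \<Sum>j=1..k. l j * Y j c)"
    unfolding conv_pts_def by blast
  define p' where "p' = (\<lambda>c. \<Sum>j=1..k. l j * Y' j c)"
  have p': "p' \<in> conv_pts k Y'" unfolding conv_pts_def p'_def using l by blast
  have "eucl d (\<lambda>c. p c - p' c) = eucl d (\<lambda>c. \<Sum>j=1..k. l j * (Y j c - Y' j c))"
    unfolding l(3) p'_def by (simp add: sum_subtractf algebra_simps)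
  also have "\<dots> \<le> (\<Sum>j=1..k. eucl d (\<lambda>c. l j * (Y j c - Y' j c)))" by (rule eucl_sum) simp
  also have "\<dots> = (\<Sum>j=1..k. l j * eucl d (\<lambda>c. Y' j c - Y j c))"
    by (rule sum.cong) (use l(1) in \<open>auto simp: eucl_scale eucl_sym[of d "Y _"]\<close>)
  also have "\<dots> \<le> (\<Sum>j=1..k. l j * B)"
    by (rule sum_mono) (use l(1) B in \<open>auto intro: mult_left_mono\<close>)
  also have "\<dots> = B" using l(2) by (simp add: sum_distrib_right[symmetric])
  finally have pp: "eucl d (\<lambda>c. p c - p' c) \<le> B" .
  have "set_dist d v (conv_pts k Y') \<le> eucl d (\<lambda>c. v c - p' c)" by (rule sd_le[OF p'])
  also have "\<dots> \<le> eucl d (\<lambda>c. v c - p c) + eucl d (\<lambda>c. p c - p' c)" by (rule eucl_tri3)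
  finally show "set_dist d v (conv_pts k Y') \<le> set_dist d v (conv_pts k Y) + B + e"
    using p(2) pp by simp
qed


lemma conv_comb:
  assumes I: "finite I" and al: "0 \<le> \<alpha>" and w: "\<forall>i\<in>I. 0 \<le> w i" and s: "\<alpha> + sum w I = 1"
    and p0: "p0 \<in> conv_pts k Y" and p: "\<forall>i\<in>I. p i \<in> conv_pts k Y"
  shows "(\<lambda>c. \<alpha> * p0 c + (\<Sum>i\<in>I. w i * p i c)) \<in> conv_pts k Y"
proof -
  obtain l0 where l0: "\<forall>j\<in>{1..k}. 0 \<le> l0 j" "(\<Sum>j=1..k. l0 j) = 1" "p0 = (\<lambda>c. \<Sum>j=1..k. l0 j * Y j c)"
    using p0 unfolding conv_pts_def by blast
  have "\<forall>i\<in>I. \<exists>l. (\<forall>j\<in>{1..k}. 0 \<le> l j) \<and> (\<Sum>j=1..k. l j) = 1 \<and> p i = (\<lambda>c. \<Sum>j=1..k. l j * Y j c)"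
    using p unfolding conv_pts_def by blast
  then obtain L where L: "\<forall>i\<in>I. (\<forall>j\<in>{1..k}. 0 \<le> L i j) \<and> (\<Sum>j=1..k. L i j) = 1 \<and> p i = (\<lambda>c. \<Sum>j=1..k. L i j * Y j c)"
    by metis
  define l where "l = (\<lambda>j. \<alpha> * l0 j + (\<Sum>i\<in>I. w i * L i j))"
  have "\<forall>j\<in>{1..k}. 0 \<le> l j" unfolding l_def using l0(1) L w al
    by (auto intro!: add_nonneg_nonneg sum_nonneg)
  moreover have "(\<Sum>j=1..k. l j) = \<alpha> * (\<Sum>j=1..k. l0 j) + (\<Sum>i\<in>I. w i * (\<Sum>j=1..k. L i j))"
    unfolding l_def by (simp add: sum.distrib sum_distrib_left sum.swap[of _ I])
  then have "(\<Sum>j=1..k. l j) = 1" using l0(2) L s by simp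
  moreover have "(\<lambda>c. \<alpha> * p0 c + (\<Sum>i\<in>I. w i * p i c)) = (\<lambda>c. \<Sum>j=1..k. l j * Y j c)"
  proof
    fix c
    have "(\<Sum>i\<in>I. w i * p i c) = (\<Sum>i\<in>I. w i * (\<Sum>j=1..k. L i j * Y j c))"
      by (rule sum.cong) (use L in auto)
    then show "\<alpha> * p0 c + (\<Sum>i\<in>I. w i * p i c) = (\<Sum>j=1..k. l j * Y j c)"
      unfolding l_def l0(3)
      by (simp add: sum.distrib sum_distrib_left sum_distrib_right sum.swap[of _ I] algebra_simps)
  qed
  ultimately show ?thesis unfolding conv_pts_def by blast
qed

lemma sd_convex:
  assumes k: "1 \<le> k" and I: "finite I" and al: "0 \<le> \<alpha>" and w: "\<forall>i\<in>I. 0 \<le> w i" and s: "\<alpha> + sum w I = 1"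
  shows "set_dist d (\<lambda>c. \<alpha> * v c + (\<Sum>i\<in>I. w i * z i c)) (conv_pts k Y)
    \<le> \<alpha> * set_dist d v (conv_pts k Y) + (\<Sum>i\<in>I. w i * set_dist d (z i) (conv_pts k Y))"
proof (rule field_le_epsilon)
  fix e :: real assume e: "0 < e"
  let ?K = "conv_pts k Y"
  obtain p0 where p0: "p0 \<in> ?K" "eucl d (\<lambda>c. v c - p0 c) < set_dist d v ?K + e"
    using sd_approx[OF conv_ne[OF k] e] by blast
  have "\<forall>i\<in>I. \<exists>p. p \<in> ?K \<and> eucl d (\<lambda>c. z i c - p c) < set_dist d (z i) ?K + e"
    using sd_approx[OF conv_ne[OF k] e] by blast
  then obtain p where p: "\<forall>i\<in>I. p i \<in> ?K \<and> eucl d (\<lambda>c. z i c - p i c) < set_dist d (z i) ?K + e"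
    by metis
  have q: "(\<lambda>c. \<alpha> * p0 c + (\<Sum>i\<in>I. w i * p i c)) \<in> ?K"
    by (rule conv_comb[OF I al w s p0(1)]) (use p in auto)
  have "set_dist d (\<lambda>c. \<alpha> * v c + (\<Sum>i\<in>I. w i * z i c)) ?K
     \<le> eucl d (\<lambda>c. (\<alpha> * v c + (\<Sum>i\<in>I. w i * z i c)) - (\<alpha> * p0 c + (\<Sum>i\<in>I. w i * p i c)))"
    by (rule sd_le[OF q])
  also have "\<dots> = eucl d (\<lambda>c. \<alpha> * (v c - p0 c) + (\<Sum>i\<in>I. w i * (z i c - p i c)))"
    by (simp add: algebra_simps sum_subtractf)
  also have "\<dots> \<le> eucl d (\<lambda>c. \<alpha> * (v c - p0 c)) + eucl d (\<lambda>c. \<Sum>i\<in>I. w i * (z i c - p i c))"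
    by (rule eucl_triangle)
  also have "\<dots> \<le> eucl d (\<lambda>c. \<alpha> * (v c - p0 c)) + (\<Sum>i\<in>I. eucl d (\<lambda>c. w i * (z i c - p i c)))"
    using eucl_sum[OF I, of d "\<lambda>i c. w i * (z i c - p i c)"] by simp
  also have "\<dots> = \<alpha> * eucl d (\<lambda>c. v c - p0 c) + (\<Sum>i\<in>I. w i * eucl d (\<lambda>c. z i c - p i c))"
    using al w by (simp add: eucl_scale)
  also have "\<dots> \<le> \<alpha> * (set_dist d v ?K + e) + (\<Sum>i\<in>I. w i * (set_dist d (z i) ?K + e))"
    apply (intro add_mono mult_left_mono sum_mono)
    using p0 p al w by auto
  also have "\<dots> = \<alpha> * set_dist d v ?K + (\<Sum>i\<in>I. w i * set_dist d (z i) ?K) + (\<alpha> + sum w I) * e"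
    by (simp add: algebra_simps sum.distrib sum_distrib_right sum_distrib_left)
  finally show "set_dist d (\<lambda>c. \<alpha> * v c + (\<Sum>i\<in>I. w i * z i c)) ?K
    \<le> \<alpha> * set_dist d v ?K + (\<Sum>i\<in>I. w i * set_dist d (z i) ?K) + e" using s by simp
qed



lemma deriv_eps:
  assumes D: "(f has_real_derivative D) (at t)" and e: "0 < e"
  shows "\<exists>\<delta>>0. \<forall>h. 0 < h \<and> h < \<delta> \<longrightarrow> \<bar>f (t+h) - f t - h * D\<bar> \<le> e * h"
proof -
  have "((\<lambda>y. (f y - f t) / (y - t)) \<longlongrightarrow> D) (at t)"
    using D by (simp add: has_field_derivative_iff)
  then have "eventually (\<lambda>y. dist ((f y - f t) / (y - t)) D < e) (at t)"
    using e by (simp add: tendsto_iff)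
  then obtain \<delta> where \<delta>: "\<delta> > 0" "\<forall>y. y \<noteq> t \<and> dist y t < \<delta> \<longrightarrow> dist ((f y - f t) / (y - t)) D < e"
    unfolding eventually_at by auto
  show ?thesis
  proof (intro exI[of _ \<delta>] conjI allI impI)
    fix h assume h: "0 < h \<and> h < \<delta>"
    then have "\<bar>(f (t+h) - f t) / h - D\<bar> < e" using \<delta>(2)[rule_format, of "t+h"] by (simp add: dist_real_def)
    then have "\<bar>((f (t+h) - f t) / h - D) * h\<bar> \<le> e * h" using h
      by (simp add: abs_mult)
    moreover have "((f (t+h) - f t) / h - D) * h = f (t+h) - f t - h * D" using h
      by (simp add: field_simps)
    ultimately show "\<bar>f (t+h) - f t - h * D\<bar> \<le> e * h" by simp
  qed (use \<delta> in auto)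
qed

lemma finite_delta:
  assumes "finite A" and "\<forall>a\<in>A. \<exists>\<delta>>0. \<forall>h. 0 < h \<and> h < \<delta> \<longrightarrow> P a h"
  shows "\<exists>\<delta>>(0::real). \<forall>h. 0 < h \<and> h < \<delta> \<longrightarrow> (\<forall>a\<in>A. P a h)"
  using assms
proof (induction A rule: finite_induct)
  case empty then show ?case by (intro exI[of _ 1]) auto
next
  case (insert x A)
  then obtain \<delta>1 where 1: "\<delta>1 > 0" "\<forall>h. 0 < h \<and> h < \<delta>1 \<longrightarrow> (\<forall>a\<in>A. P a h)" by auto
  obtain \<delta>2 where 2: "\<delta>2 > 0" "\<forall>h. 0 < h \<and> h < \<delta>2 \<longrightarrow> P x h" using insert by auto
  show ?case using 1 2 by (intro exI[of _ "min \<delta>1 \<delta>2"]) auto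
qed

lemma dini_mono0:
  fixes \<phi> :: "real \<Rightarrow> real"
  assumes cont: "continuous_on {p..q} \<phi>" and pq: "p \<le> q"
    and D: "\<forall>t\<in>{p..<q}. \<forall>e>0. \<exists>\<delta>>0. \<forall>h. 0 < h \<and> h < \<delta> \<longrightarrow> \<phi> (t+h) \<le> \<phi> t + e * h"
  shows "\<phi> q \<le> \<phi> p"
proof (rule field_le_epsilon)
  fix e :: real assume e: "0 < e"
  define \<epsilon> where "\<epsilon> = e / (q - p + 1)"
  have \<epsilon>: "0 < \<epsilon>" using e pq by (simp add: \<epsilon>_def)
  have \<epsilon>e: "\<epsilon> * (q - p) \<le> e" using e pq unfolding \<epsilon>_def by (simp add: field_simps)
  define g where "g = (\<lambda>s. \<phi> s - \<phi> p - \<epsilon> * (s - p))"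
  define S where "S = {p..q} \<inter> g -` {..0}"
  have gc: "continuous_on {p..q} g" unfolding g_def by (intro continuous_intros cont)
  have cS: "closed S" unfolding S_def by (rule continuous_closed_preimage[OF gc]) auto
  have pS: "p \<in> S" using pq by (simp add: S_def g_def)
  have bS: "bdd_above S" unfolding S_def by (rule bdd_aboveI[of _ q]) auto
  define s where "s = Sup S"
  have sS: "s \<in> S" unfolding s_def by (rule closed_contains_Sup) (use pS bS cS in auto)
  have "s = q"
  proof (rule ccontr)
    assume "s \<noteq> q"
    then have sq: "s < q" using sS by (auto simp: S_def)
    have "s \<in> {p..<q}" using sS sq by (auto simp: S_def)
    then obtain \<delta> where \<delta>: "\<delta> > 0" "\<forall>h. 0 < h \<and> h < \<delta> \<longrightarrow> \<phi> (s+h) \<le> \<phi> s + \<epsilon> * h"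
      using D \<epsilon> by blast
    define h where "h = min (\<delta>/2) (q - s)"
    have h: "0 < h" "h < \<delta>" "s + h \<le> q" using \<delta> sq by (auto simp: h_def)
    have "g (s+h) = \<phi> (s+h) - \<phi> p - \<epsilon> * (s + h - p)" by (simp add: g_def)
    also have "\<dots> \<le> \<phi> s + \<epsilon> * h - \<phi> p - \<epsilon> * (s + h - p)" using \<delta>(2) h by force
    also have "\<dots> = g s" by (simp add: g_def algebra_simps)
    finally have "g (s+h) \<le> 0" using sS by (simp add: S_def)
    then have "s + h \<in> S" using sS h by (simp add: S_def)
    then have "s + h \<le> s" unfolding s_def by (rule cSup_upper[OF _ bS])
    then show False using h by simp
  qed
  then have "g q \<le> 0" using sS by (simp add: S_def)
  then show "\<phi> q \<le> \<phi> p + e" using \<epsilon>e by (simp add: g_def)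
qed

lemma dini_mono_open:
  fixes \<phi> :: "real \<Rightarrow> real"
  assumes cont: "continuous_on {p..q} \<phi>" and pq: "p \<le> q"
    and D: "\<forall>t\<in>{p<..<q}. \<forall>e>0. \<exists>\<delta>>0. \<forall>h. 0 < h \<and> h < \<delta> \<longrightarrow> \<phi> (t+h) \<le> \<phi> t + e * h"
  shows "\<phi> q \<le> \<phi> p"
proof (cases "p = q")
  case True then show ?thesis by simp
next
  case False
  then have pq': "p < q" using pq by simp
  have le: "\<phi> q \<le> \<phi> p'" if "p < p'" "p' < q" for p'
    by (rule dini_mono0) (use that cont D in \<open>auto intro: continuous_on_subset\<close>)
  show ?thesis
  proof (rule field_le_epsilon)
    fix e :: real assume e: "0 < e"
    obtain \<delta> where \<delta>: "\<delta> > 0" "\<forall>x'\<in>{p..q}. dist x' p < \<delta> \<longrightarrow> dist (\<phi> x') (\<phi> p) < e"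
      using cont pq e unfolding continuous_on_iff by (meson atLeastAtMost_iff order_refl)
    define p' where "p' = p + min (\<delta>/2) ((q - p)/2)"
    have m1: "0 < min (\<delta>/2) ((q - p)/2)" using \<delta>(1) pq' by simp
    have m2: "min (\<delta>/2) ((q - p)/2) < \<delta>" using \<delta>(1) pq' by linarith
    have m3: "min (\<delta>/2) ((q - p)/2) < q - p" using \<delta>(1) pq' by (simp add: min_def)
    have p': "p < p'" "p' < q" "dist p' p < \<delta>" using m1 m2 m3 unfolding p'_def dist_real_def by auto
    have "\<phi> p' < \<phi> p + e" using \<delta>(2)[rule_format, of p'] p' by (auto simp: dist_real_def)
    then show "\<phi> q \<le> \<phi> p + e" using le[OF p'(1,2)] by simp
  qed
qed

lemma dini_mono:
  fixes \<phi> :: "real \<Rightarrow> real"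
  assumes "finite F"
  shows "continuous_on {p..q} \<phi> \<Longrightarrow> p \<le> q \<Longrightarrow>
    \<forall>t\<in>{p<..<q} - F. \<forall>e>0. \<exists>\<delta>>0. \<forall>h. 0 < h \<and> h < \<delta> \<longrightarrow> \<phi> (t+h) \<le> \<phi> t + e * h
    \<Longrightarrow> \<phi> q \<le> \<phi> p"
  using assms
proof (induction F arbitrary: p q rule: finite_induct)
  case empty then show ?case using dini_mono_open by simp
next
  case (insert f F)
  show ?case
  proof (cases "f \<in> {p<..<q}")
    case True
    have "\<phi> q \<le> \<phi> f"
      by (rule insert.IH) (use insert.prems True in \<open>auto intro: continuous_on_subset\<close>)
    moreover have "\<phi> f \<le> \<phi> p"
      by (rule insert.IH) (use insert.prems True in \<open>auto intro: continuous_on_subset\<close>)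
    ultimately show ?thesis by simp
  next
    case False
    show ?thesis
      by (rule insert.IH) (use insert.prems False in auto)
  qed
qed

lemma dini_comp:
  fixes \<phi> :: "real \<Rightarrow> real"
  assumes F: "finite F" and cont: "continuous_on {p..q} \<phi>" and pq: "p \<le> q" and p0: "\<phi> p \<le> 0"
    and D: "\<forall>t\<in>{p<..<q} - F. 0 < \<phi> t \<longrightarrow> (\<forall>e>0. \<exists>\<delta>>0. \<forall>h. 0 < h \<and> h < \<delta> \<longrightarrow> \<phi> (t+h) \<le> \<phi> t + e * h)"
  shows "\<phi> q \<le> 0"
proof (rule ccontr)
  assume qpos: "\<not> \<phi> q \<le> 0"
  define S where "S = {p..q} \<inter> \<phi> -` {..0}"
  have cS: "closed S" unfolding S_def by (rule continuous_closed_preimage[OF cont]) auto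
  have pS: "p \<in> S" using pq p0 by (simp add: S_def)
  have bS: "bdd_above S" unfolding S_def by (rule bdd_aboveI[of _ q]) auto
  define s where "s = Sup S"
  have sS: "s \<in> S" unfolding s_def by (rule closed_contains_Sup) (use pS bS cS in auto)
  have sq: "s \<le> q" using sS by (auto simp: S_def)
  have pos: "0 < \<phi> r" if "s < r" "r \<le> q" for r
  proof (rule ccontr)
    assume "\<not> 0 < \<phi> r"
    then have "r \<in> S" using that sS by (auto simp: S_def)
    then have "r \<le> s" unfolding s_def by (rule cSup_upper[OF _ bS])
    then show False using that by simp
  qed
  have "\<phi> q \<le> \<phi> s"
    by (rule dini_mono[OF F]) (use sS sq cont D pos in \<open>auto intro: continuous_on_subset simp: S_def\<close>)
  then show False using sS qpos by (simp add: S_def)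
qed

lemma continuous_on_Max:
  fixes f :: "'i \<Rightarrow> real \<Rightarrow> real"
  assumes "finite I" "I \<noteq> {}"
  shows "(\<forall>i\<in>I. continuous_on S (f i)) \<Longrightarrow> continuous_on S (\<lambda>t. Max ((\<lambda>i. f i t) ` I))"
  using assms(1,2)
proof (induction I rule: finite_ne_induct)
  case (singleton x) then show ?case by simp
next
  case (insert x F)
  have "(\<lambda>t. Max ((\<lambda>i. f i t) ` insert x F)) = (\<lambda>t. max (f x t) (Max ((\<lambda>i. f i t) ` F)))"
    using insert by (simp add: Max_insert)
  then show ?case using insert by (auto intro: continuous_on_max)
qed



lemma vec_deriv_eps:
  assumes D: "\<forall>c<d. ((\<lambda>s. g s c) has_real_derivative V c) (at t)" and e: "0 < e"
  shows "\<exists>\<delta>>0. \<forall>h. 0 < h \<and> h < \<delta> \<longrightarrow> eucl d (\<lambda>c. g (t+h) c - g t c - h * V c) \<le> e * h"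
proof (cases "d = 0")
  case True then show ?thesis using e by (intro exI[of _ 1]) (auto simp: eucl_def)
next
  case False
  have "\<forall>c\<in>{..<d}. \<exists>\<delta>>0. \<forall>h. 0 < h \<and> h < \<delta> \<longrightarrow> \<bar>g (t+h) c - g t c - h * V c\<bar> \<le> (e / d) * h"
  proof
    fix c assume "c \<in> {..<d}"
    then have "((\<lambda>s. g s c) has_real_derivative V c) (at t)" using D by simp
    moreover have "0 < e / real d" using e False by simp
    ultimately show "\<exists>\<delta>>0. \<forall>h. 0 < h \<and> h < \<delta> \<longrightarrow> \<bar>g (t+h) c - g t c - h * V c\<bar> \<le> (e / d) * h"
      by (rule deriv_eps)
  qed
  from finite_delta[OF finite_lessThan this]
  obtain \<delta> where \<delta>: "\<delta> > 0" "\<forall>h. 0 < h \<and> h < \<delta> \<longrightarrow> (\<forall>c\<in>{..<d}. \<bar>g (t+h) c - g t c - h * V c\<bar> \<le> (e / d) * h)"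
    by blast
  show ?thesis
  proof (intro exI[of _ \<delta>] conjI allI impI)
    fix h assume h: "0 < h \<and> h < \<delta>"
    have "eucl d (\<lambda>c. g (t+h) c - g t c - h * V c) \<le> (\<Sum>c<d. \<bar>g (t+h) c - g t c - h * V c\<bar>)"
      by (rule eucl_le_sum_abs)
    also have "\<dots> \<le> (\<Sum>c<d. (e / d) * h)" by (rule sum_mono) (use \<delta> h in auto)
    also have "\<dots> = e * h" using False by simp
    finally show "eucl d (\<lambda>c. g (t+h) c - g t c - h * V c) \<le> e * h" .
  qed (use \<delta> in auto)
qed

lemma sum_Inl_Inr:
  assumes "finite N" "finite L"
  shows "(\<Sum>i\<in>Inl ` N \<union> Inr ` L. g i) = (\<Sum>l\<in>N. g (Inl l)) + (\<Sum>l\<in>L. g (Inr l))"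
proof -
  have "(\<Sum>i\<in>Inl ` N \<union> Inr ` L. g i) = (\<Sum>i\<in>Inl ` N. g i) + (\<Sum>i\<in>Inr ` L. g i)"
    by (rule sum.union_disjoint) (use assms in auto)
  moreover have "(\<Sum>i\<in>Inl ` N. g i) = (\<Sum>l\<in>N. g (Inl l))" by (rule sum.reindex_cong[of Inl]) auto
  moreover have "(\<Sum>i\<in>Inr ` L. g i) = (\<Sum>l\<in>L. g (Inr l))" by (rule sum.reindex_cong[of Inr]) auto
  ultimately show ?thesis by simp
qed

locale sys =
  fixes n k d :: nat and a_lo a_hi Z :: real and \<sigma> :: "real \<Rightarrow> digraph"
    and a :: "nat \<Rightarrow> nat \<Rightarrow> state \<Rightarrow> state \<Rightarrow> real \<Rightarrow> real" and b :: "nat \<Rightarrow> nat \<Rightarrow> state \<Rightarrow> state \<Rightarrow> real \<Rightarrow> real"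
    and U :: "nat \<Rightarrow> state \<Rightarrow> real \<Rightarrow> pt" and W :: "nat \<Rightarrow> real \<Rightarrow> pt"
    and x :: "nat \<Rightarrow> real \<Rightarrow> pt" and y :: "nat \<Rightarrow> real \<Rightarrow> pt" and E :: "real set"
  assumes n1: "1 \<le> n" and k1: "1 \<le> k" and alo: "0 < a_lo"
    and a_bnd: "\<forall>i\<in>{1..n}. \<forall>j\<in>{1..n}. \<forall>X Y t. a_lo \<le> a i j X Y t \<and> a i j X Y t \<le> a_hi"
    and b_bnd: "\<forall>i\<in>{1..n}. \<forall>j\<in>{1..k}. \<forall>X Y t. 0 \<le> b i j X Y t"
    and Zb: "\<forall>t\<ge>0. znorm n k d U W y t \<le> Z"
    and Efin: "\<forall>T. finite (E \<inter> {0..T})"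
    and xcont: "\<forall>c<d. \<forall>i\<in>{1..n}. continuous_on {0..} (\<lambda>s. x i s c)"
    and ycont: "\<forall>c<d. \<forall>i\<in>{1..k}. continuous_on {0..} (\<lambda>s. y i s c)"
    and derivs: "\<forall>t. t > 0 \<and> t \<notin> E \<longrightarrow> (\<forall>c<d.
           (\<forall>i\<in>{1..k}. ((\<lambda>s. y i s c) has_real_derivative U i (st k y t) t c) (at t))
         \<and> (\<forall>i\<in>{1..n}. ((\<lambda>s. x i s c) has_real_derivative
               (\<Sum>j\<in>Nset n \<sigma> i t. a i j (st n x t) (st k y t) t * (x j t c - x i t c))
             + (\<Sum>j\<in>Lset k \<sigma> i t. b i j (st n x t) (st k y t) t * (y j t c - x i t c))
             + W i t c) (at t)))"
begin

abbreviation f where "f j t \<equiv> fdist k d x y j t"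

lemma st_y: "l \<in> {1..k} \<Longrightarrow> st k y t l = y l t"
  by (simp add: st_def)

lemma W_le_znorm: "j \<in> {1..n} \<Longrightarrow> eucl d (W j t) \<le> znorm n k d U W y t"
proof -
  assume j: "j \<in> {1..n}"
  have "(eucl d (W j t))\<^sup>2 \<le> (\<Sum>i=1..n. (eucl d (W i t))\<^sup>2)"
    by (rule member_le_sum) (use j in auto)
  also have "\<dots> \<le> (\<Sum>i=1..k. (eucl d (U i (st k y t) t))\<^sup>2) + (\<Sum>i=1..n. (eucl d (W i t))\<^sup>2)"
    by (simp add: sum_nonneg)
  finally have "sqrt ((eucl d (W j t))\<^sup>2) \<le> znorm n k d U W y t"
    unfolding znorm_def by (rule real_sqrt_le_mono)
  then show ?thesis by (simp add: eucl_nonneg)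
qed

lemma U_le_znorm: "l \<in> {1..k} \<Longrightarrow> eucl d (U l (st k y t) t) \<le> znorm n k d U W y t"
proof -
  assume j: "l \<in> {1..k}"
  have "(eucl d (U l (st k y t) t))\<^sup>2 \<le> (\<Sum>i=1..k. (eucl d (U i (st k y t) t))\<^sup>2)"
    by (rule member_le_sum) (use j in auto)
  also have "\<dots> \<le> (\<Sum>i=1..k. (eucl d (U i (st k y t) t))\<^sup>2) + (\<Sum>i=1..n. (eucl d (W i t))\<^sup>2)"
    by (simp add: sum_nonneg)
  finally have "sqrt ((eucl d (U l (st k y t) t))\<^sup>2) \<le> znorm n k d U W y t"
    unfolding znorm_def by (rule real_sqrt_le_mono)
  then show ?thesis by (simp add: eucl_nonneg)
qed

lemma Z_nonneg: "0 \<le> Z"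
proof -
  have "0 \<le> znorm n k d U W y 0" unfolding znorm_def by (intro real_sqrt_ge_zero add_nonneg_nonneg sum_nonneg) auto
  moreover have "znorm n k d U W y 0 \<le> Z" using Zb by simp
  ultimately show ?thesis by linarith
qed

lemma f_nonneg: "0 \<le> f j t"
  unfolding fdist_def by (rule sd_nonneg[OF conv_ne[OF k1]])

end



context sys begin

lemma f_le: "f j t' \<le> f j t + ((\<Sum>c<d. \<bar>x j t' c - x j t c\<bar>) + (\<Sum>l\<in>{1..k}. \<Sum>c<d. \<bar>y l t' c - y l t c\<bar>))"
proof -
  let ?G2 = "(\<Sum>l\<in>{1..k}. \<Sum>c<d. \<bar>y l t' c - y l t c\<bar>)"
  have hm: "\<forall>l\<in>{1..k}. eucl d (\<lambda>c. st k y t' l c - st k y t l c) \<le> ?G2"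
  proof
    fix l assume l: "l \<in> {1..k}"
    have "eucl d (\<lambda>c. st k y t' l c - st k y t l c) \<le> (\<Sum>c<d. \<bar>y l t' c - y l t c\<bar>)"
      using eucl_le_sum_abs[of d "\<lambda>c. y l t' c - y l t c"] l by (simp add: st_y)
    also have "\<dots> \<le> ?G2" by (rule member_le_sum) (use l in \<open>auto intro: sum_nonneg\<close>)
    finally show "eucl d (\<lambda>c. st k y t' l c - st k y t l c) \<le> ?G2" .
  qed
  have "f j t' \<le> set_dist d (x j t') (conv_pts k (st k y t)) + ?G2"
    unfolding fdist_def by (rule sd_hull_move[OF k1 hm])
  also have "\<dots> \<le> f j t + eucl d (\<lambda>c. x j t' c - x j t c) + ?G2"
    unfolding fdist_def using sd_lip[OF conv_ne[OF k1]] by simp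
  also have "\<dots> \<le> f j t + (\<Sum>c<d. \<bar>x j t' c - x j t c\<bar>) + ?G2"
    using eucl_le_sum_abs by simp
  finally show ?thesis by simp
qed

lemma f_lip: "\<bar>f j t' - f j t\<bar> \<le> (\<Sum>c<d. \<bar>x j t' c - x j t c\<bar>) + (\<Sum>l\<in>{1..k}. \<Sum>c<d. \<bar>y l t' c - y l t c\<bar>)"
proof -
  have "f j t \<le> f j t' + ((\<Sum>c<d. \<bar>x j t c - x j t' c\<bar>) + (\<Sum>l\<in>{1..k}. \<Sum>c<d. \<bar>y l t c - y l t' c\<bar>))"
    by (rule f_le)
  moreover have "(\<Sum>c<d. \<bar>x j t c - x j t' c\<bar>) = (\<Sum>c<d. \<bar>x j t' c - x j t c\<bar>)"
    by (simp add: abs_minus_commute)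
  moreover have "(\<Sum>l\<in>{1..k}. \<Sum>c<d. \<bar>y l t c - y l t' c\<bar>) = (\<Sum>l\<in>{1..k}. \<Sum>c<d. \<bar>y l t' c - y l t c\<bar>)"
    by (simp add: abs_minus_commute)
  ultimately show ?thesis using f_le[of j t' t] by linarith
qed

lemma fcont: assumes j: "j \<in> {1..n}" shows "continuous_on {0..} (\<lambda>t. f j t)"
  unfolding continuous_on_iff
proof (intro ballI allI impI)
  fix t :: real and \<epsilon> :: real assume t: "t \<in> {0..}" and e: "0 < \<epsilon>"
  define G where "G = (\<lambda>t'. (\<Sum>c<d. \<bar>x j t' c - x j t c\<bar>) + (\<Sum>l\<in>{1..k}. \<Sum>c<d. \<bar>y l t' c - y l t c\<bar>))"
  have "continuous_on {0..} G" unfolding G_def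
    using xcont ycont j by (intro continuous_intros) auto
  then obtain \<delta> where \<delta>: "\<delta> > 0" "\<forall>t'\<in>{0..}. dist t' t < \<delta> \<longrightarrow> dist (G t') (G t) < \<epsilon>"
    using t e unfolding continuous_on_iff by blast
  show "\<exists>\<delta>>0. \<forall>t'\<in>{0..}. dist t' t < \<delta> \<longrightarrow> dist (f j t') (f j t) < \<epsilon>"
  proof (intro exI[of _ \<delta>] conjI ballI impI)
    fix t' :: real assume "t' \<in> {0..}" "dist t' t < \<delta>"
    then have "dist (G t') (G t) < \<epsilon>" using \<delta> by blast
    moreover have "G t = 0" by (simp add: G_def)
    moreover have "\<bar>f j t' - f j t\<bar> \<le> G t'" unfolding G_def by (rule f_lip)
    ultimately show "dist (f j t') (f j t) < \<epsilon>" by (simp add: dist_real_def)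
  qed (use \<delta> in auto)
qed


lemma dplus:
  assumes t: "0 < t" "t \<notin> E" and j: "j \<in> {1..n}" and e: "0 < e"
  shows "\<exists>\<delta>>0. \<forall>h. 0 < h \<and> h < \<delta> \<longrightarrow> f j (t+h) \<le> f j t + h * ((\<Sum>l\<in>Nset n \<sigma> j t. a j l (st n x t) (st k y t) t * (f l t - f j t)) + 2*Z + e)"
proof -
  define N where "N = Nset n \<sigma> j t"
  define L where "L = Lset k \<sigma> j t"
  define A where "A = (\<lambda>l. a j l (st n x t) (st k y t) t)"
  define B where "B = (\<lambda>l. b j l (st n x t) (st k y t) t)"
  define V where "V = (\<lambda>c. (\<Sum>l\<in>N. A l * (x l t c - x j t c)) + (\<Sum>l\<in>L. B l * (y l t c - x j t c)) + W j t c)"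
  define S where "S = sum A N + sum B L"
  define Yt where "Yt = st k y t"
  have N: "N \<subseteq> {1..n}" "finite N" unfolding N_def Nset_def by auto
  have L: "L \<subseteq> {1..k}" "finite L" unfolding L_def Lset_def by auto
  have Apos: "\<forall>l\<in>N. 0 \<le> A l" using N a_bnd j alo unfolding A_def by (meson less_le_trans less_imp_le subsetD)
  have Bpos: "\<forall>l\<in>L. 0 \<le> B l" using L b_bnd j unfolding B_def by blast
  have S0: "0 \<le> S" unfolding S_def using Apos Bpos by (intro add_nonneg_nonneg sum_nonneg) auto
  have dx: "\<forall>c<d. ((\<lambda>s. x j s c) has_real_derivative V c) (at t)"
    using derivs t j unfolding V_def N_def L_def A_def B_def by blast
  have dy: "\<forall>l\<in>{1..k}. \<forall>c<d. ((\<lambda>s. y l s c) has_real_derivative U l (st k y t) t c) (at t)"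
    using derivs t by blast
  have e3: "0 < e/3" using e by simp
  obtain \<delta>1 where \<delta>1: "\<delta>1 > 0" "\<forall>h. 0 < h \<and> h < \<delta>1 \<longrightarrow> eucl d (\<lambda>c. x j (t+h) c - x j t c - h * V c) \<le> (e/3) * h"
    using vec_deriv_eps[OF dx e3] by blast
  have "\<forall>l\<in>{1..k}. \<exists>\<delta>>0. \<forall>h. 0 < h \<and> h < \<delta> \<longrightarrow> eucl d (\<lambda>c. y l (t+h) c - y l t c - h * U l (st k y t) t c) \<le> (e/3) * h"
    using vec_deriv_eps[OF _ e3] dy by blast
  from finite_delta[OF finite_atLeastAtMost this]
  obtain \<delta>2 where \<delta>2: "\<delta>2 > 0" "\<forall>h. 0 < h \<and> h < \<delta>2 \<longrightarrow> (\<forall>l\<in>{1..k}. eucl d (\<lambda>c. y l (t+h) c - y l t c - h * U l (st k y t) t c) \<le> (e/3) * h)"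
    by blast
  define \<delta> where "\<delta> = min \<delta>1 (min \<delta>2 (1 / (S + 1)))"
  have Zt: "znorm n k d U W y t \<le> Z" using Zb t by simp
  show ?thesis
  proof (intro exI[of _ \<delta>] conjI allI impI)
    show "0 < \<delta>" using \<delta>1 \<delta>2 S0 by (simp add: \<delta>_def)
  next
    fix h assume h: "0 < h \<and> h < \<delta>"
    have h1: "h < \<delta>1" "h < \<delta>2" "h < 1 / (S+1)" using h by (auto simp: \<delta>_def)
    have hS: "h * S \<le> 1"
    proof -
      have "h * (S + 1) < 1" using h1(3) S0 by (simp add: field_simps)
      then show ?thesis using h by (simp add: algebra_simps)
    qed
    have ym: "\<forall>l\<in>{1..k}. eucl d (\<lambda>c. st k y (t+h) l c - Yt l c) \<le> h * (Z + e/3)"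
    proof
      fix l assume l: "l \<in> {1..k}"
      have "eucl d (\<lambda>c. y l (t+h) c - y l t c)
          \<le> eucl d (\<lambda>c. y l (t+h) c - y l t c - h * U l (st k y t) t c) + eucl d (\<lambda>c. h * U l (st k y t) t c)"
        using eucl_triangle[of d "\<lambda>c. y l (t+h) c - y l t c - h * U l (st k y t) t c" "\<lambda>c. h * U l (st k y t) t c"]
        by simp
      also have "\<dots> \<le> (e/3) * h + h * Z"
      proof (rule add_mono)
        show "eucl d (\<lambda>c. y l (t+h) c - y l t c - h * U l (st k y t) t c) \<le> (e/3) * h"
          using \<delta>2(2) h h1 l by blast
        have "eucl d (\<lambda>c. h * U l (st k y t) t c) = h * eucl d (U l (st k y t) t)"
          using h by (simp add: eucl_scale)
        also have "\<dots> \<le> h * Z" using U_le_znorm[OF l, of t] Zt h by (intro mult_left_mono) auto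
        finally show "eucl d (\<lambda>c. h * U l (st k y t) t c) \<le> h * Z" .
      qed
      finally show "eucl d (\<lambda>c. st k y (t+h) l c - Yt l c) \<le> h * (Z + e/3)"
        using l by (simp add: st_y Yt_def algebra_simps)
    qed
    have sa: "f j (t+h) \<le> set_dist d (x j (t+h)) (conv_pts k Yt) + h * (Z + e/3)"
      unfolding fdist_def Yt_def[symmetric] by (rule sd_hull_move[OF k1 ym])
    have sb: "set_dist d (x j (t+h)) (conv_pts k Yt) \<le> set_dist d (\<lambda>c. x j t c + h * V c) (conv_pts k Yt) + (e/3) * h"
    proof -
      have "set_dist d (x j (t+h)) (conv_pts k Yt) \<le> set_dist d (\<lambda>c. x j t c + h * V c) (conv_pts k Yt)
          + eucl d (\<lambda>c. x j (t+h) c - (x j t c + h * V c))"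
        by (rule sd_lip[OF conv_ne[OF k1]])
      moreover have "eucl d (\<lambda>c. x j (t+h) c - x j t c - h * V c) \<le> (e/3) * h"
        using \<delta>1(2) h h1 by blast
      moreover have "(\<lambda>c. x j (t+h) c - (x j t c + h * V c)) = (\<lambda>c. x j (t+h) c - x j t c - h * V c)"
        by (simp add: diff_diff_eq)
      ultimately show ?thesis by simp
    qed
    define w where "w = (\<lambda>i. case i of Inl l \<Rightarrow> h * A l | Inr l \<Rightarrow> h * B l)"
    define z where "z = (\<lambda>i. case i of Inl l \<Rightarrow> x l t | Inr l \<Rightarrow> Yt l)"
    define I where "I = Inl ` N \<union> Inr ` L"
    have I: "finite I" unfolding I_def using N L by auto
    define u where "u = (\<lambda>c. (1 - h * S) * x j t c + (\<Sum>i\<in>I. w i * z i c))"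
    have sumI: "(\<Sum>i\<in>I. g i) = (\<Sum>l\<in>N. g (Inl l)) + (\<Sum>l\<in>L. g (Inr l))" for g :: "nat + nat \<Rightarrow> real"
      unfolding I_def by (rule sum_Inl_Inr[OF N(2) L(2)])
    have wsum: "sum w I = h * S"
      unfolding sumI by (simp add: w_def S_def sum_distrib_left algebra_simps)
    have yl: "\<forall>l\<in>L. Yt l = y l t" using L by (auto simp: Yt_def st_y)
    have ueq: "(\<lambda>c. x j t c + h * V c) = (\<lambda>c. u c + h * W j t c)"
    proof
      fix c
      have "(\<Sum>l\<in>L. h * B l * Yt l c) = (\<Sum>l\<in>L. h * B l * y l t c)"
        by (rule sum.cong) (use yl in auto)
      then show "x j t c + h * V c = u c + h * W j t c"
        unfolding u_def sumI V_def S_def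
        by (simp add: w_def z_def algebra_simps sum_distrib_left sum_subtractf sum_distrib_right sum.distrib)
    qed
    have sc: "set_dist d (\<lambda>c. x j t c + h * V c) (conv_pts k Yt) \<le> set_dist d u (conv_pts k Yt) + h * Z"
    proof -
      have "set_dist d (\<lambda>c. u c + h * W j t c) (conv_pts k Yt) \<le> set_dist d u (conv_pts k Yt)
          + eucl d (\<lambda>c. u c + h * W j t c - u c)"
        by (rule sd_lip[OF conv_ne[OF k1]])
      moreover have "eucl d (\<lambda>c. u c + h * W j t c - u c) = h * eucl d (W j t)"
        using h by (simp add: eucl_scale)
      moreover have "h * eucl d (W j t) \<le> h * Z" using W_le_znorm[OF j, of t] Zt h
        by (intro mult_left_mono) auto
      ultimately show ?thesis unfolding ueq by simp
    qed
    have wpos: "\<forall>i\<in>I. 0 \<le> w i" unfolding I_def w_def using Apos Bpos h by auto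
    have sd: "set_dist d u (conv_pts k Yt) \<le> (1 - h * S) * f j t + (\<Sum>l\<in>N. h * A l * f l t)"
    proof -
      have "set_dist d u (conv_pts k Yt) \<le> (1 - h * S) * set_dist d (x j t) (conv_pts k Yt)
          + (\<Sum>i\<in>I. w i * set_dist d (z i) (conv_pts k Yt))"
        unfolding u_def by (rule sd_convex[OF k1 I _ wpos]) (use hS wsum in auto)
      moreover have "(\<Sum>i\<in>I. w i * set_dist d (z i) (conv_pts k Yt)) = (\<Sum>l\<in>N. h * A l * f l t)"
      proof -
        have "(\<Sum>l\<in>L. h * B l * set_dist d (Yt l) (conv_pts k Yt)) = 0"
          using L by (intro sum.neutral) (auto simp: sd_Y)
        then show ?thesis unfolding sumI by (simp add: w_def z_def fdist_def Yt_def)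
      qed
      ultimately show ?thesis by (simp add: fdist_def Yt_def)
    qed
    have fin: "(1 - h * S) * f j t + (\<Sum>l\<in>N. h * A l * f l t) \<le> f j t + h * (\<Sum>l\<in>N. A l * (f l t - f j t))"
    proof -
      have "(1 - h * S) * f j t + (\<Sum>l\<in>N. h * A l * f l t) = f j t + h * (\<Sum>l\<in>N. A l * (f l t - f j t)) - h * sum B L * f j t"
        unfolding S_def by (simp add: algebra_simps sum_distrib_left sum_distrib_right sum_subtractf)
      moreover have "0 \<le> h * sum B L * f j t" using h Bpos f_nonneg by (intro mult_nonneg_nonneg sum_nonneg) auto
      ultimately show ?thesis by linarith
    qed
    define Q where "Q = (\<Sum>l\<in>N. A l * (f l t - f j t))"
    have "f j (t+h) \<le> f j t + h * Q + h * Z + (e/3) * h + h * (Z + e/3)"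
      using sa sb sc sd fin unfolding Q_def by linarith
    moreover have "h * (Z + e/3) = h * Z + (h * e) / 3" "(e/3) * h = (h * e)/3" by (simp_all add: algebra_simps)
    moreover have "h * (Q + 2*Z + e) = h * Q + 2 * (h * Z) + h * e" by (simp add: algebra_simps)
    moreover have "0 \<le> h * e" using h e by simp
    ultimately have "f j (t+h) \<le> f j t + h * (Q + 2*Z + e)" by linarith
    then show "f j (t+h) \<le> f j t + h * ((\<Sum>l\<in>Nset n \<sigma> j t. a j l (st n x t) (st k y t) t * (f l t - f j t)) + 2*Z + e)"
      unfolding N_def[symmetric] Q_def by (simp add: A_def)
  qed
qed

end


context sys begin

abbreviation hd where "hd t \<equiv> hdist n k d x y t"

lemma f_le_hd: "j \<in> {1..n} \<Longrightarrow> f j t \<le> hd t"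
  unfolding hdist_def by (rule Max_ge) auto

lemma hd_nonneg: "0 \<le> hd t"
  using f_le_hd[of 1 t] f_nonneg[of 1 t] n1 by simp

lemma hd_cont: "continuous_on {0..} (\<lambda>t. hd t)"
  unfolding hdist_def by (rule continuous_on_Max) (use n1 fcont in auto)

lemma ahi_pos: "0 < a_hi"
  using a_bnd n1 alo by (meson atLeastAtMost_iff le_refl less_le_trans order_trans)

lemma global_bound:
  assumes t0: "0 \<le> t0" and tt: "t0 \<le> t"
  shows "hd t \<le> hd t0 + 2 * Z * (t - t0)"
proof -
  define \<phi> where "\<phi> = (\<lambda>s. hd s - 2 * Z * (s - t0))"
  have "\<phi> t \<le> \<phi> t0"
  proof (rule dini_mono[where F="E \<inter> {0..t}" and p=t0 and q=t and \<phi>=\<phi>])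
    show "finite (E \<inter> {0..t})" using Efin by blast
    show "continuous_on {t0..t} \<phi>" unfolding \<phi>_def
      by (intro continuous_intros continuous_on_subset[OF hd_cont]) (use t0 in auto)
    show "t0 \<le> t" by fact
    show "\<forall>s\<in>{t0<..<t} - E \<inter> {0..t}. \<forall>e>0. \<exists>\<delta>>0. \<forall>h. 0 < h \<and> h < \<delta> \<longrightarrow> \<phi> (s + h) \<le> \<phi> s + e * h"
    proof (intro ballI allI impI)
      fix s e :: real assume s: "s \<in> {t0<..<t} - E \<inter> {0..t}" and e: "0 < e"
      have s0: "0 < s" "s \<notin> E" using s t0 by auto
      have "\<forall>j\<in>{1..n}. \<exists>\<delta>>0. \<forall>h. 0 < h \<and> h < \<delta> \<longrightarrow> f j (s+h) \<le> hd s + h * (2*Z + e)"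
      proof
        fix j assume j: "j \<in> {1..n}"
        show "\<exists>\<delta>>0. \<forall>h. 0 < h \<and> h < \<delta> \<longrightarrow> f j (s+h) \<le> hd s + h * (2*Z + e)"
        proof (cases "f j s = hd s")
          case True
          define Q where "Q = (\<Sum>l\<in>Nset n \<sigma> j s. a j l (st n x s) (st k y s) s * (f l s - f j s))"
          obtain \<delta> where \<delta>: "\<delta> > 0" "\<forall>h. 0 < h \<and> h < \<delta> \<longrightarrow> f j (s+h) \<le> f j s + h * (Q + 2*Z + e)"
            using dplus[OF s0 j e] unfolding Q_def by blast
          have Q: "Q \<le> 0" unfolding Q_def
          proof (rule sum_nonpos)
            fix l assume l: "l \<in> Nset n \<sigma> j s"
            then have l1: "l \<in> {1..n}" by (simp add: Nset_def)
            have "0 \<le> a j l (st n x s) (st k y s) s" using a_bnd j l1 alo by (meson less_le_trans less_imp_le)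
            moreover have "f l s - f j s \<le> 0" using f_le_hd[OF l1] True by simp
            ultimately show "a j l (st n x s) (st k y s) s * (f l s - f j s) \<le> 0" by (rule mult_nonneg_nonpos)
          qed
          show ?thesis
          proof (intro exI[of _ \<delta>] conjI allI impI)
            fix h assume h: "0 < h \<and> h < \<delta>"
            have 1: "h * Q \<le> 0" using Q h by (simp add: mult_nonneg_nonpos)
            have 2: "f j (s+h) \<le> f j s + h * (Q + 2*Z + e)" using \<delta>(2) h by blast
            have 3: "h * (Q + 2*Z + e) = h * Q + h * (2*Z + e)" by (simp add: distrib_left)
            show "f j (s+h) \<le> hd s + h * (2*Z + e)" using 1 2 3 True by linarith
          qed (use \<delta> in auto)
        next
          case False
          then have lt: "f j s < hd s" using f_le_hd[OF j, of s] by simp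
          obtain \<delta> where \<delta>: "\<delta> > 0" "\<forall>s'\<in>{0..}. dist s' s < \<delta> \<longrightarrow> dist (f j s') (f j s) < hd s - f j s"
          proof -
            have sc: "s \<in> {0..}" using s0 by simp
            have ep: "0 < hd s - f j s" using lt by simp
            show ?thesis using fcont[OF j, unfolded continuous_on_iff] sc ep that by blast
          qed
          show ?thesis
          proof (intro exI[of _ \<delta>] conjI allI impI)
            fix h assume h: "0 < h \<and> h < \<delta>"
            have "s + h \<in> {0..}" "dist (s+h) s < \<delta>" using h s0 by (auto simp: dist_real_def)
            then have "dist (f j (s+h)) (f j s) < hd s - f j s" using \<delta>(2) by blast
            then have "f j (s+h) < hd s" by (simp add: dist_real_def)
            moreover have "0 \<le> h * (2*Z + e)" using h e Z_nonneg by simp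
            ultimately show "f j (s+h) \<le> hd s + h * (2*Z + e)" by simp
          qed (use \<delta> in auto)
        qed
      qed
      from finite_delta[OF finite_atLeastAtMost this]
      obtain \<delta> where \<delta>: "\<delta> > 0" "\<forall>h. 0 < h \<and> h < \<delta> \<longrightarrow> (\<forall>j\<in>{1..n}. f j (s+h) \<le> hd s + h * (2*Z + e))"
        by blast
      show "\<exists>\<delta>>0. \<forall>h. 0 < h \<and> h < \<delta> \<longrightarrow> \<phi> (s + h) \<le> \<phi> s + e * h"
      proof (intro exI[of _ \<delta>] conjI allI impI)
        fix h assume h: "0 < h \<and> h < \<delta>"
        have "hd (s+h) \<le> hd s + h * (2*Z + e)"
          unfolding hdist_def[of n k d x y "s+h"] using \<delta>(2) h n1 by (subst Max_le_iff) auto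
        then show "\<phi> (s + h) \<le> \<phi> s + e * h" unfolding \<phi>_def by (simp add: algebra_simps)
      qed (use \<delta> in auto)
    qed
  qed
  then show ?thesis unfolding \<phi>_def by simp
qed

lemma comp_m:
  assumes p0: "0 \<le> p" and pq: "p \<le> q" and m: "m \<in> {1..n}"
    and Hd: "\<forall>s\<in>{p<..<q}. (H has_real_derivative H' s) (at s)"
    and Hc: "continuous_on {p..q} H"
    and init: "f m p \<le> H p"
    and key: "\<forall>s\<in>{p<..<q}. s \<notin> E \<longrightarrow> H s < f m s \<longrightarrow>
          (\<Sum>l\<in>Nset n \<sigma> m s. a m l (st n x s) (st k y s) s * (f l s - f m s)) + 2*Z \<le> H' s"
  shows "f m q \<le> H q"
proof -
  define \<phi> where "\<phi> = (\<lambda>s. f m s - H s)"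
  have "\<phi> q \<le> 0"
  proof (rule dini_comp[where F="E \<inter> {0..q}" and p=p and q=q and \<phi>=\<phi>])
    show "finite (E \<inter> {0..q})" using Efin by blast
    show "continuous_on {p..q} \<phi>" unfolding \<phi>_def
      by (intro continuous_intros Hc continuous_on_subset[OF fcont[OF m]]) (use p0 in auto)
    show "p \<le> q" by fact
    show "\<phi> p \<le> 0" using init by (simp add: \<phi>_def)
    show "\<forall>s\<in>{p<..<q} - E \<inter> {0..q}. 0 < \<phi> s \<longrightarrow> (\<forall>e>0. \<exists>\<delta>>0. \<forall>h. 0 < h \<and> h < \<delta> \<longrightarrow> \<phi> (s + h) \<le> \<phi> s + e * h)"
    proof (intro ballI allI impI)
      fix s e :: real assume s: "s \<in> {p<..<q} - E \<inter> {0..q}" and pos: "0 < \<phi> s" and e: "0 < e"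
      have s0: "0 < s" "s \<notin> E" using s p0 by auto
      have e2: "0 < e/2" using e by simp
      define Q where "Q = (\<Sum>l\<in>Nset n \<sigma> m s. a m l (st n x s) (st k y s) s * (f l s - f m s))"
      have sI: "s \<in> {p<..<q}" "s \<notin> E" "H s < f m s" using s pos s0 by (auto simp: \<phi>_def)
      have QH: "Q + 2*Z \<le> H' s" unfolding Q_def using key sI by blast
      obtain \<delta>1 where \<delta>1: "\<delta>1 > 0" "\<forall>h. 0 < h \<and> h < \<delta>1 \<longrightarrow> f m (s+h) \<le> f m s + h * (Q + 2*Z + e/2)"
        using dplus[OF s0 m e2] unfolding Q_def by blast
      have "(H has_real_derivative H' s) (at s)" using Hd s by auto
      from deriv_eps[OF this e2]
      obtain \<delta>2 where \<delta>2: "\<delta>2 > 0" "\<forall>h. 0 < h \<and> h < \<delta>2 \<longrightarrow> \<bar>H (s+h) - H s - h * H' s\<bar> \<le> e/2 * h"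
        by blast
      show "\<exists>\<delta>>0. \<forall>h. 0 < h \<and> h < \<delta> \<longrightarrow> \<phi> (s + h) \<le> \<phi> s + e * h"
      proof (intro exI[of _ "min \<delta>1 \<delta>2"] conjI allI impI)
        fix h assume h: "0 < h \<and> h < min \<delta>1 \<delta>2"
        have a1: "f m (s+h) \<le> f m s + h * (Q + 2*Z + e/2)" using \<delta>1 h by auto
        have "\<bar>H (s+h) - H s - h * H' s\<bar> \<le> e/2 * h" using \<delta>2 h by simp
        then have a2: "H s + h * H' s - e/2 * h \<le> H (s+h)" unfolding abs_le_iff by linarith
        have a3: "h * (Q + 2*Z) \<le> h * H' s" using QH h by (simp add: mult_left_mono)
        have a4: "h * (Q + 2*Z + e/2) = h * (Q + 2*Z) + e/2 * h" by (simp add: algebra_simps)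
        show "\<phi> (s + h) \<le> \<phi> s + e * h" unfolding \<phi>_def using a1 a2 a3 a4 by linarith
      qed (use \<delta>1 \<delta>2 in auto)
    qed
  qed
  then show ?thesis by (simp add: \<phi>_def)
qed

lemma sum_bound:
  assumes m: "m \<in> {1..n}" and J: "J \<subseteq> {1..n}" and Mb: "\<forall>l\<in>{1..n}. f l s \<le> Mb"
  shows "(\<Sum>l\<in>J. a m l X Y s * (f l s - f m s)) \<le> n * a_hi * (Mb - f m s)"
proof -
  have Mm: "0 \<le> Mb - f m s" using Mb m by auto
  have "(\<Sum>l\<in>J. a m l X Y s * (f l s - f m s)) \<le> (\<Sum>l\<in>J. a_hi * (Mb - f m s))"
  proof (rule sum_mono)
    fix l assume l: "l \<in> J"
    then have l1: "l \<in> {1..n}" using J by auto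
    have A: "0 \<le> a m l X Y s" "a m l X Y s \<le> a_hi" using a_bnd m l1 alo by (meson less_le_trans less_imp_le)+
    have "a m l X Y s * (f l s - f m s) \<le> a m l X Y s * (Mb - f m s)"
      using A Mb l1 by (intro mult_left_mono) auto
    also have "\<dots> \<le> a_hi * (Mb - f m s)" using A Mm by (intro mult_right_mono) auto
    finally show "a m l X Y s * (f l s - f m s) \<le> a_hi * (Mb - f m s)" .
  qed
  also have "\<dots> = card J * (a_hi * (Mb - f m s))" by simp
  also have "\<dots> \<le> n * (a_hi * (Mb - f m s))"
  proof (rule mult_right_mono)
    have "card J \<le> card {1..n}" using J by (intro card_mono) auto
    then show "real (card J) \<le> real n" by simp
    show "0 \<le> a_hi * (Mb - f m s)" using ahi_pos Mm by simp
  qed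
  finally show ?thesis by (simp add: algebra_simps)
qed

end


context sys begin

lemma step2:
  assumes t0: "0 \<le> t0" and m: "m \<in> {1..n}" and i: "i \<in> {1..n}"
    and tau: "0 < \<tau>D" "\<tau>D \<le> Tst"
    and arc: "\<forall>s\<in>{t0..<t0+\<tau>D}. (Fv i, Fv m) \<in> \<sigma> s"
    and fi: "\<forall>s\<in>{t0..<t0+\<tau>D}. f i s \<le> \<mu>0 * hd t0 + d0"
    and d0: "0 \<le> d0" and mu: "0 \<le> \<mu>0" "\<mu>0 \<le> 1"
    and c: "c = n*a_hi + a_lo" and rho: "\<rho> = (n*a_hi + a_lo*\<mu>0)/c"
    and gam: "2 + 2*n*a_hi*Tst \<le> c*\<gamma>"
    and t: "t \<in> {t0..t0+\<tau>D}"
  shows "f m t \<le> hd t0 * (\<rho> + (1-\<rho>)*exp(-c*(t-t0))) + \<gamma>*Z + d0"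
proof -
  define V0 where "V0 = hd t0"
  have V0: "0 \<le> V0" unfolding V0_def by (rule hd_nonneg)
  have na: "0 \<le> real n * a_hi" using ahi_pos by simp
  have cpos: "0 < c" using c alo na by linarith
  have cr: "c * \<rho> = n*a_hi + a_lo*\<mu>0" using cpos rho by simp
  have rho_mu: "\<mu>0 \<le> \<rho>"
  proof -
    have 1: "real n * a_hi * \<mu>0 \<le> real n * a_hi" using na mu by (simp add: mult_left_le)
    have 2: "c*\<mu>0 = real n*a_hi*\<mu>0 + a_lo*\<mu>0" using c by (simp add: algebra_simps)
    have "c * \<mu>0 \<le> c * \<rho>" using 1 2 cr by linarith
    then show ?thesis using cpos by simp
  qed
  have rho1: "\<rho> \<le> 1"
  proof -
    have 1: "a_lo * \<mu>0 \<le> a_lo" using alo mu by (simp add: mult_left_le)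
    have "c * \<rho> \<le> c * 1" using 1 cr c by linarith
    then show ?thesis using cpos by simp
  qed
  have gpos: "0 \<le> \<gamma>"
  proof -
    have "0 < c * \<gamma>" using gam ahi_pos tau by (smt (verit) mult_nonneg_nonneg of_nat_0_le_iff)
    then show ?thesis using cpos by (simp add: zero_less_mult_iff)
  qed
  define H where "H = (\<lambda>s. V0 * (\<rho> + (1-\<rho>)*exp(-c*(s-t0))) + \<gamma>*Z + d0)"
  define H' where "H' = (\<lambda>s. V0 * ((1-\<rho>)*(exp(-c*(s-t0)) * (-c))))"
  have "f m t \<le> H t"
  proof (rule comp_m[where p=t0 and q=t and H=H and H'=H'])
    show "0 \<le> t0" "t0 \<le> t" "m \<in> {1..n}" using t0 t m by auto
    show "\<forall>s\<in>{t0<..<t}. (H has_real_derivative H' s) (at s)"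
      unfolding H_def H'_def by (auto intro!: derivative_eq_intros)
    show "continuous_on {t0..t} H" unfolding H_def by (intro continuous_intros)
    have "f m t0 \<le> V0" unfolding V0_def by (rule f_le_hd[OF m])
    moreover have "H t0 = V0 + \<gamma>*Z + d0" by (simp add: H_def algebra_simps)
    moreover have "0 \<le> \<gamma>*Z" using gpos Z_nonneg by simp
    ultimately show "f m t0 \<le> H t0" using d0 by linarith
    show "\<forall>s\<in>{t0<..<t}. s \<notin> E \<longrightarrow> H s < f m s \<longrightarrow>
          (\<Sum>l\<in>Nset n \<sigma> m s. a m l (st n x s) (st k y s) s * (f l s - f m s)) + 2*Z \<le> H' s"
    proof (intro ballI impI)
      fix s assume s: "s \<in> {t0<..<t}" and sE: "s \<notin> E" and Hs: "H s < f m s"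
      define e where "e = f m s"
      define Mb where "Mb = V0 + 2*Z*Tst"
      have sI: "s \<in> {t0..<t0+\<tau>D}" using s t by auto
      have Mb: "\<forall>l\<in>{1..n}. f l s \<le> Mb"
      proof
        fix l assume l: "l \<in> {1..n}"
        have "f l s \<le> hd s" by (rule f_le_hd[OF l])
        also have "\<dots> \<le> V0 + 2*Z*(s - t0)" unfolding V0_def by (rule global_bound) (use t0 s in auto)
        also have "\<dots> \<le> Mb" unfolding Mb_def using Z_nonneg s t tau by (intro add_left_mono mult_left_mono) auto
        finally show "f l s \<le> Mb" .
      qed
      have g1: "\<rho> \<le> \<rho> + (1-\<rho>)*exp(-c*(s-t0))" using rho1 by simp
      have "V0 * \<mu>0 \<le> V0 * (\<rho> + (1-\<rho>)*exp(-c*(s-t0)))"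
        using V0 rho_mu g1 by (intro mult_left_mono) auto
      moreover have "0 \<le> \<gamma> * Z" using gpos Z_nonneg by simp
      ultimately have "\<mu>0 * V0 + d0 \<le> H s" unfolding H_def by (simp add: algebra_simps)
      moreover have "f i s \<le> \<mu>0 * V0 + d0" using fi sI unfolding V0_def by (simp add: mult.commute)
      ultimately have fie: "f i s < e" using Hs unfolding e_def by linarith
      then have im: "i \<noteq> m" unfolding e_def by auto
      define N where "N = Nset n \<sigma> m s"
      have iN: "i \<in> N" unfolding N_def Nset_def using arc sI i by auto
      have finN: "finite N" "N \<subseteq> {1..n}" unfolding N_def Nset_def by auto
      define A where "A = (\<lambda>l. a m l (st n x s) (st k y s) s)"
      have Ai: "a_lo \<le> A i" unfolding A_def using a_bnd m i by blast
      have "(\<Sum>l\<in>N. A l * (f l s - e)) = A i * (f i s - e) + (\<Sum>l\<in>N - {i}. A l * (f l s - e))"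
        by (rule sum.remove[OF finN(1) iN])
      moreover have "A i * (f i s - e) \<le> a_lo * (f i s - e)"
        by (rule mult_right_mono_neg[OF Ai]) (use fie in simp)
      moreover have "(\<Sum>l\<in>N - {i}. A l * (f l s - e)) \<le> n * a_hi * (Mb - e)"
        unfolding A_def e_def by (rule sum_bound[OF m _ Mb]) (use finN in auto)
      ultimately have k1: "(\<Sum>l\<in>N. A l * (f l s - e)) \<le> a_lo * (f i s - e) + n * a_hi * (Mb - e)" by linarith
      have k2: "a_lo * (f i s - e) \<le> a_lo * (\<mu>0 * V0 + d0 - e)"
        using alo \<open>f i s \<le> \<mu>0 * V0 + d0\<close> by (intro mult_left_mono) auto
      have id1: "a_lo * (\<mu>0 * V0 + d0 - e) + n * a_hi * (Mb - e) + 2*Z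
          = (n*a_hi + a_lo*\<mu>0) * V0 + a_lo * d0 + (2 + 2*n*a_hi*Tst) * Z - c * e"
        unfolding Mb_def c by (simp add: algebra_simps)
      have Hp: "H' s = (n*a_hi + a_lo*\<mu>0) * V0 - c * H s + c*\<gamma>*Z + c*d0"
        unfolding H_def H'_def cr[symmetric] by (simp add: algebra_simps)
      have k3: "c * H s \<le> c * e" using Hs cpos unfolding e_def by simp
      have k4: "a_lo * d0 \<le> c * d0" using d0 ahi_pos unfolding c by (simp add: algebra_simps)
      have k5: "(2 + 2*n*a_hi*Tst) * Z \<le> c*\<gamma>*Z" using gam Z_nonneg by (intro mult_right_mono) auto
      show "(\<Sum>l\<in>Nset n \<sigma> m s. a m l (st n x s) (st k y s) s * (f l s - f m s)) + 2*Z \<le> H' s"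
      proof -
        have "(\<Sum>l\<in>Nset n \<sigma> m s. a m l (st n x s) (st k y s) s * (f l s - f m s)) = (\<Sum>l\<in>N. A l * (f l s - e))"
          by (simp add: N_def A_def e_def)
        then show ?thesis using k1 k2 id1 Hp k3 k4 k5 by linarith
      qed
    qed
  qed
  then show ?thesis unfolding H_def V0_def .
qed


lemma step3:
  assumes t0: "0 \<le> t0" and m: "m \<in> {1..n}" and tau: "0 \<le> \<tau>D" "\<tau>D \<le> Tst"
    and d0: "0 \<le> d0" and c2: "c2 = n*a_hi" and gam: "2 + 2*c2*Tst \<le> c2*\<gamma>" and gpos: "0 \<le> \<gamma>" and g: "g \<le> 1"
    and init: "f m (t0+\<tau>D) \<le> hd t0 * g + \<gamma>*Z + d0"
    and t: "t \<in> {t0+\<tau>D..t0+Tst}"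
  shows "f m t \<le> hd t0 * (1 - (1-g)*exp(-c2*(t-t0-\<tau>D))) + \<gamma>*Z + d0"
proof -
  define V0 where "V0 = hd t0"
  have c2pos: "0 \<le> c2" using c2 ahi_pos by simp
  define H where "H = (\<lambda>s. V0 * (1 - (1-g)*exp(-c2*(s-t0-\<tau>D))) + \<gamma>*Z + d0)"
  define H' where "H' = (\<lambda>s. V0 * (-((1-g)*(exp(-c2*(s-t0-\<tau>D)) * (-c2)))))"
  have "f m t \<le> H t"
  proof (rule comp_m[where p="t0+\<tau>D" and q=t and H=H and H'=H'])
    show "0 \<le> t0+\<tau>D" "t0+\<tau>D \<le> t" "m \<in> {1..n}" using t0 t m tau by auto
    show "\<forall>s\<in>{t0+\<tau>D<..<t}. (H has_real_derivative H' s) (at s)"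
      unfolding H_def H'_def by (auto intro!: derivative_eq_intros)
    show "continuous_on {t0+\<tau>D..t} H" unfolding H_def by (intro continuous_intros)
    show "f m (t0+\<tau>D) \<le> H (t0+\<tau>D)" using init by (simp add: H_def V0_def)
    show "\<forall>s\<in>{t0+\<tau>D<..<t}. s \<notin> E \<longrightarrow> H s < f m s \<longrightarrow>
          (\<Sum>l\<in>Nset n \<sigma> m s. a m l (st n x s) (st k y s) s * (f l s - f m s)) + 2*Z \<le> H' s"
    proof (intro ballI impI)
      fix s assume s: "s \<in> {t0+\<tau>D<..<t}" and sE: "s \<notin> E" and Hs: "H s < f m s"
      define e where "e = f m s"
      define Mb where "Mb = V0 + 2*Z*Tst"
      have Mb: "\<forall>l\<in>{1..n}. f l s \<le> Mb"
      proof
        fix l assume l: "l \<in> {1..n}"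
        have "f l s \<le> hd s" by (rule f_le_hd[OF l])
        also have "\<dots> \<le> V0 + 2*Z*(s - t0)" unfolding V0_def by (rule global_bound) (use t0 s tau in auto)
        also have "\<dots> \<le> Mb" unfolding Mb_def using Z_nonneg s t tau by (intro add_left_mono mult_left_mono) auto
        finally show "f l s \<le> Mb" .
      qed
      have k1: "(\<Sum>l\<in>Nset n \<sigma> m s. a m l (st n x s) (st k y s) s * (f l s - f m s)) \<le> n * a_hi * (Mb - e)"
        unfolding e_def by (rule sum_bound[OF m _ Mb]) (auto simp: Nset_def)
      have id1: "n * a_hi * (Mb - e) + 2*Z = c2 * V0 + (2 + 2*c2*Tst) * Z - c2 * e"
        unfolding Mb_def c2 by (simp add: algebra_simps)
      have Hp: "H' s = c2 * V0 - c2 * H s + c2*\<gamma>*Z + c2*d0"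
        unfolding H_def H'_def by (simp add: algebra_simps)
      have k3: "c2 * H s \<le> c2 * e" using Hs c2pos unfolding e_def by (simp add: mult_left_mono)
      have k4: "0 \<le> c2 * d0" using d0 c2pos by simp
      have k5: "(2 + 2*c2*Tst) * Z \<le> c2*\<gamma>*Z" using gam Z_nonneg by (intro mult_right_mono) auto
      show "(\<Sum>l\<in>Nset n \<sigma> m s. a m l (st n x s) (st k y s) s * (f l s - f m s)) + 2*Z \<le> H' s"
        using k1 id1 Hp k3 k4 k5 by linarith
    qed
  qed
  then show ?thesis unfolding H_def V0_def .
qed

end


theorem lemma6:
  fixes n :: nat and \<mu>0 a_lo a_hi \<tau>D Tst :: real
  assumes "2 \<le> n" and "0 < a_lo" and "a_lo \<le> a_hi" and "0 < \<tau>D" and "\<tau>D < Tst"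
    and "0 < \<mu>0" and "\<mu>0 < 1"
  shows "\<exists>(\<xi>::real \<Rightarrow> real) (\<gamma>2::real).
     continuous_on {0..Tst} \<xi>
   \<and> (\<forall>s\<in>{0..Tst}. 0 < \<xi> s \<and> \<xi> s \<le> 1)
   \<and> \<xi> 0 = 1
   \<and> (\<forall>s\<in>{0..\<tau>D}. \<forall>s'\<in>{0..\<tau>D}. s < s' \<longrightarrow> \<xi> s' < \<xi> s)
   \<and> (\<forall>s\<in>{\<tau>D..Tst}. \<forall>s'\<in>{\<tau>D..Tst}. s < s' \<longrightarrow> \<xi> s < \<xi> s')
   \<and> \<xi> Tst < 1
   \<and> 0 < \<gamma>2
   \<and> (\<forall>(k::nat) (d::nat) (b_lo::real) (\<sigma>::real \<Rightarrow> digraph)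
        (a::nat \<Rightarrow> nat \<Rightarrow> state \<Rightarrow> state \<Rightarrow> real \<Rightarrow> real) (b::nat \<Rightarrow> nat \<Rightarrow> state \<Rightarrow> state \<Rightarrow> real \<Rightarrow> real)
        (U::nat \<Rightarrow> state \<Rightarrow> real \<Rightarrow> pt) (W::nat \<Rightarrow> real \<Rightarrow> pt)
        (x::nat \<Rightarrow> real \<Rightarrow> pt) (y::nat \<Rightarrow> real \<Rightarrow> pt) (t0::real) (d0::real) (i::nat) (m::nat).
        1 \<le> k \<and> 1 \<le> d \<and> 0 < b_lo
      \<and> traj5 n k d \<tau>D a_lo a_hi b_lo \<sigma> a b U W x y
      \<and> (\<exists>B. \<forall>t\<ge>0. znorm n k d U W y t \<le> B)
      \<and> 0 \<le> t0 \<and> 0 < d0 \<and> i \<in> {1..n} \<and> m \<in> {1..n}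
      \<and> (\<forall>t\<in>{t0..<t0+\<tau>D}. (Fv i, Fv m) \<in> \<sigma> t)
      \<and> (\<forall>t\<in>{t0..<t0+\<tau>D}. fdist k d x y i t \<le> \<mu>0 * hdist n k d x y t0 + d0)
      \<longrightarrow> (\<forall>t\<in>{t0..t0+Tst}. fdist k d x y m t
              \<le> \<xi> (t - t0) * hdist n k d x y t0
                 + \<gamma>2 * (SUP s\<in>{0..}. znorm n k d U W y s) + d0))"
proof -
  have n0: "0 < real n" using assms(1) by simp
  have ahi: "0 < a_hi" using assms(2,3) by simp
  have na: "0 < real n * a_hi" using n0 ahi by simp
  define c where "c = real n * a_hi + a_lo"
  define \<rho> where "\<rho> = (real n * a_hi + a_lo * \<mu>0) / c"
  define c2 where "c2 = real n * a_hi"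
  define \<gamma> where "\<gamma> = (2 + 2*real n*a_hi*Tst)/a_lo + 2*Tst + 2/(real n * a_hi)"
  define g1 where "g1 = (\<lambda>s. \<rho> + (1-\<rho>)*exp(-c * s))"
  define g2 where "g2 = (\<lambda>s. 1 - (1 - g1 \<tau>D)*exp(-c2*(s - \<tau>D)))"
  define \<xi> where "\<xi> = (\<lambda>s. if s \<le> \<tau>D then g1 s else g2 s)"
  have cpos: "0 < c" unfolding c_def using na assms(2) by simp
  have c2pos: "0 < c2" unfolding c2_def using na by simp
  have cr: "c * \<rho> = real n * a_hi + a_lo * \<mu>0" unfolding \<rho>_def using cpos by simp
  have rho1: "\<rho> < 1"
  proof -
    have "a_lo * \<mu>0 < a_lo" using assms(2,7) by simp
    then have "c * \<rho> < c" using cr c_def by linarith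
    then have "c * \<rho> < c * 1" by simp
    then show ?thesis using cpos by simp
  qed
  have rho0: "0 < \<rho>"
  proof -
    have "0 < c * \<rho>" using cr na assms(2,6) by (smt (verit) mult_pos_pos)
    then show ?thesis using cpos by (simp add: zero_less_mult_iff)
  qed
  have g1p: "\<rho> < g1 s" "g1 s \<le> 1" if "0 \<le> s" for s
  proof -
    have "0 < exp(-c * s)" "exp(-c * s) \<le> 1" using cpos that by auto
    moreover have "0 < 1 - \<rho>" using rho1 by simp
    ultimately have "0 < (1-\<rho>)*exp(-c * s)" "(1-\<rho>)*exp(-c * s) \<le> (1-\<rho>)"
      by (auto simp: mult_le_cancel_left1)
    then show "\<rho> < g1 s" "g1 s \<le> 1" unfolding g1_def by auto
  qed
  have g1t: "g1 \<tau>D < 1"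
  proof -
    have "exp(-c*\<tau>D) < 1" using cpos assms(4) by simp
    then have "(1-\<rho>)*exp(-c*\<tau>D) < (1-\<rho>)*1" using rho1 by (intro mult_strict_left_mono) auto
    then show ?thesis unfolding g1_def by simp
  qed
  have g1t0: "0 < g1 \<tau>D" using g1p[of \<tau>D] rho0 assms(4) by simp
  have g2p: "g1 \<tau>D \<le> g2 s" "g2 s < 1" if "\<tau>D \<le> s" for s
  proof -
    have "0 < exp(-c2*(s - \<tau>D))" "exp(-c2*(s - \<tau>D)) \<le> 1" using c2pos that by auto
    moreover have "0 < 1 - g1 \<tau>D" using g1t by simp
    ultimately have "(1 - g1 \<tau>D)*exp(-c2*(s - \<tau>D)) \<le> (1 - g1 \<tau>D)" "0 < (1 - g1 \<tau>D)*exp(-c2*(s - \<tau>D))"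
      by (auto simp: mult_le_cancel_left1)
    then show "g1 \<tau>D \<le> g2 s" "g2 s < 1" unfolding g2_def by auto
  qed
  have g2t: "g2 \<tau>D = g1 \<tau>D" unfolding g2_def by simp
  have xi2: "\<xi> s = g2 s" if "\<tau>D \<le> s" for s
    using that g2t by (cases "s = \<tau>D") (auto simp: \<xi>_def)
  have Tpos: "0 < Tst" using assms(4,5) by simp
  have nat0: "0 \<le> 2*real n*a_hi*Tst"
  proof -
    have "0 \<le> (real n*a_hi)*Tst" using mult_pos_pos[OF na Tpos] by simp
    then show ?thesis by (simp add: mult.assoc)
  qed
  have gpos: "0 < \<gamma>"
  proof -
    have "0 \<le> (2 + 2*real n*a_hi*Tst)/a_lo" using nat0 assms(2) by simp
    moreover have "0 < 2/(real n * a_hi)" using na by simp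
    ultimately show ?thesis unfolding \<gamma>_def using Tpos by linarith
  qed
  have gam1: "2 + 2*real n*a_hi*Tst \<le> c*\<gamma>"
  proof -
    define X where "X = (2 + 2*real n*a_hi*Tst)/a_lo"
    have X0: "0 \<le> X" unfolding X_def using assms(2) nat0 by simp
    have "a_lo * X = 2 + 2*real n*a_hi*Tst" unfolding X_def using assms(2) by simp
    moreover have "a_lo * X \<le> c * X" unfolding c_def using X0 na by (simp add: algebra_simps)
    moreover have "c * X \<le> c * \<gamma>" unfolding \<gamma>_def X_def[symmetric] using cpos assms(4,5) na
      by (intro mult_left_mono) auto
    ultimately show ?thesis by linarith
  qed
  have gam2: "2 + 2*c2*Tst \<le> c2*\<gamma>"
  proof -
    have "c2 * (2*Tst + 2/c2) = 2 + 2*c2*Tst" using c2pos by (simp add: field_simps)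
    moreover have "0 \<le> (2 + 2*real n*a_hi*Tst)/a_lo" using nat0 assms(2) by simp
    then have "2*Tst + 2/c2 \<le> \<gamma>" unfolding \<gamma>_def c2_def by linarith
    then have "c2 * (2*Tst + 2/c2) \<le> c2 * \<gamma>" using c2pos by (intro mult_left_mono) auto
    ultimately show ?thesis by linarith
  qed
  show ?thesis
  proof (intro exI[of _ \<xi>] exI[of _ \<gamma>] conjI)
    have "\<xi> = (\<lambda>s. g1 (min s \<tau>D) + g2 (max s \<tau>D) - g1 \<tau>D)"
      by (rule ext) (auto simp: \<xi>_def g2t min_def max_def)
    then show "continuous_on {0..Tst} \<xi>" unfolding g1_def g2_def
      by (simp only:) (intro continuous_intros)
    show "\<forall>s\<in>{0..Tst}. 0 < \<xi> s \<and> \<xi> s \<le> 1"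
    proof
      fix s assume s: "s \<in> {0..Tst}"
      show "0 < \<xi> s \<and> \<xi> s \<le> 1"
      proof (cases "s \<le> \<tau>D")
        case True then show ?thesis using g1p[of s] s rho0 by (simp add: \<xi>_def)
      next
        case False then show ?thesis using g2p[of s] g1t0 xi2[of s] by simp
      qed
    qed
    show "\<xi> 0 = 1" using assms(4) by (simp add: \<xi>_def g1_def)
    show "\<forall>s\<in>{0..\<tau>D}. \<forall>s'\<in>{0..\<tau>D}. s < s' \<longrightarrow> \<xi> s' < \<xi> s"
    proof (intro ballI impI)
      fix s s' assume s: "s \<in> {0..\<tau>D}" "s' \<in> {0..\<tau>D}" "s < s'"
      have "exp(-c * s') < exp(-c * s)" using cpos s(3) by simp
      then have "(1-\<rho>)*exp(-c * s') < (1-\<rho>)*exp(-c * s)" using rho1 by (intro mult_strict_left_mono) auto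
      then show "\<xi> s' < \<xi> s" using s by (simp add: \<xi>_def g1_def)
    qed
    show "\<forall>s\<in>{\<tau>D..Tst}. \<forall>s'\<in>{\<tau>D..Tst}. s < s' \<longrightarrow> \<xi> s < \<xi> s'"
    proof (intro ballI impI)
      fix s s' assume s: "s \<in> {\<tau>D..Tst}" "s' \<in> {\<tau>D..Tst}" "s < s'"
      have "exp(-c2*(s' - \<tau>D)) < exp(-c2*(s - \<tau>D))" using c2pos s(3) by simp
      then have "(1 - g1 \<tau>D)*exp(-c2*(s' - \<tau>D)) < (1 - g1 \<tau>D)*exp(-c2*(s - \<tau>D))"
        using g1t by (intro mult_strict_left_mono) auto
      then show "\<xi> s < \<xi> s'" using s xi2[of s] xi2[of s'] by (simp add: g2_def)
    qed
    show "\<xi> Tst < 1" using xi2[of Tst] g2p[of Tst] assms(5) by simp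
    show "0 < \<gamma>" by fact
    show "\<forall>(k::nat) (d::nat) (b_lo::real) (\<sigma>::real \<Rightarrow> digraph)
        (a::nat \<Rightarrow> nat \<Rightarrow> state \<Rightarrow> state \<Rightarrow> real \<Rightarrow> real) (b::nat \<Rightarrow> nat \<Rightarrow> state \<Rightarrow> state \<Rightarrow> real \<Rightarrow> real)
        (U::nat \<Rightarrow> state \<Rightarrow> real \<Rightarrow> pt) (W::nat \<Rightarrow> real \<Rightarrow> pt)
        (x::nat \<Rightarrow> real \<Rightarrow> pt) (y::nat \<Rightarrow> real \<Rightarrow> pt) (t0::real) (d0::real) (i::nat) (m::nat).
        1 \<le> k \<and> 1 \<le> d \<and> 0 < b_lo
      \<and> traj5 n k d \<tau>D a_lo a_hi b_lo \<sigma> a b U W x y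
      \<and> (\<exists>B. \<forall>t\<ge>0. znorm n k d U W y t \<le> B)
      \<and> 0 \<le> t0 \<and> 0 < d0 \<and> i \<in> {1..n} \<and> m \<in> {1..n}
      \<and> (\<forall>t\<in>{t0..<t0+\<tau>D}. (Fv i, Fv m) \<in> \<sigma> t)
      \<and> (\<forall>t\<in>{t0..<t0+\<tau>D}. fdist k d x y i t \<le> \<mu>0 * hdist n k d x y t0 + d0)
      \<longrightarrow> (\<forall>t\<in>{t0..t0+Tst}. fdist k d x y m t
              \<le> \<xi> (t - t0) * hdist n k d x y t0
                 + \<gamma> * (SUP s\<in>{0..}. znorm n k d U W y s) + d0)"
    proof (intro allI impI)
      fix k d :: nat and b_lo :: real and \<sigma> :: "real \<Rightarrow> digraph"
        and a :: "nat \<Rightarrow> nat \<Rightarrow> state \<Rightarrow> state \<Rightarrow> real \<Rightarrow> real" and b :: "nat \<Rightarrow> nat \<Rightarrow> state \<Rightarrow> state \<Rightarrow> real \<Rightarrow> real"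
        and U :: "nat \<Rightarrow> state \<Rightarrow> real \<Rightarrow> pt" and W :: "nat \<Rightarrow> real \<Rightarrow> pt"
        and x :: "nat \<Rightarrow> real \<Rightarrow> pt" and y :: "nat \<Rightarrow> real \<Rightarrow> pt" and t0 d0 :: real and i m :: nat
      assume H: "1 \<le> k \<and> 1 \<le> d \<and> 0 < b_lo
      \<and> traj5 n k d \<tau>D a_lo a_hi b_lo \<sigma> a b U W x y
      \<and> (\<exists>B. \<forall>t\<ge>0. znorm n k d U W y t \<le> B)
      \<and> 0 \<le> t0 \<and> 0 < d0 \<and> i \<in> {1..n} \<and> m \<in> {1..n}
      \<and> (\<forall>t\<in>{t0..<t0+\<tau>D}. (Fv i, Fv m) \<in> \<sigma> t)
      \<and> (\<forall>t\<in>{t0..<t0+\<tau>D}. fdist k d x y i t \<le> \<mu>0 * hdist n k d x y t0 + d0)"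
      then have k1: "1 \<le> k" and blo: "0 < b_lo" and tr: "traj5 n k d \<tau>D a_lo a_hi b_lo \<sigma> a b U W x y"
        and bnd: "\<exists>B. \<forall>t\<ge>0. znorm n k d U W y t \<le> B" and t0: "0 \<le> t0" and d0: "0 < d0"
        and i: "i \<in> {1..n}" and m: "m \<in> {1..n}" and arc: "\<forall>t\<in>{t0..<t0+\<tau>D}. (Fv i, Fv m) \<in> \<sigma> t"
        and fi: "\<forall>t\<in>{t0..<t0+\<tau>D}. fdist k d x y i t \<le> \<mu>0 * hdist n k d x y t0 + d0"
        by auto
      define Z where "Z = (SUP s\<in>{0..}. znorm n k d U W y s)"
      obtain B where B: "\<forall>t\<ge>0. znorm n k d U W y t \<le> B" using bnd by blast
      have bdd: "bdd_above ((\<lambda>s. znorm n k d U W y s) ` {0..})"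
        using B by (intro bdd_aboveI[of _ B]) auto
      have Zb: "\<forall>t\<ge>0. znorm n k d U W y t \<le> Z"
        unfolding Z_def using bdd by (auto intro: cSUP_upper)
      note T = tr[unfolded traj5_def]
      note Ta = T[THEN conjunct2, THEN conjunct2, THEN conjunct1]
      note Tb = T[THEN conjunct2, THEN conjunct2, THEN conjunct2, THEN conjunct1]
      note TE = T[THEN conjunct2, THEN conjunct2, THEN conjunct2, THEN conjunct2, THEN conjunct2,
                  THEN conjunct2, THEN conjunct2, THEN conjunct2]
      have abnd: "\<forall>i\<in>{1..n}. \<forall>j\<in>{1..n}. \<forall>X Y t. a_lo \<le> a i j X Y t \<and> a i j X Y t \<le> a_hi"
        using Ta by blast
      have bbnd: "\<forall>i\<in>{1..n}. \<forall>j\<in>{1..k}. \<forall>X Y t. 0 \<le> b i j X Y t"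
      proof (intro ballI allI)
        fix i j X Y t assume "i \<in> {1..n}" "j \<in> {1..k}"
        then have "b_lo \<le> b i j X Y t" using Tb by blast
        then show "0 \<le> b i j X Y t" using blo by simp
      qed
      obtain E where E: "\<forall>T. finite (E \<inter> {0..T})"
        "\<forall>c<d. (\<forall>i\<in>{1..n}. continuous_on {0..} (\<lambda>s. x i s c)) \<and> (\<forall>i\<in>{1..k}. continuous_on {0..} (\<lambda>s. y i s c))"
        "\<forall>t. t > 0 \<and> t \<notin> E \<longrightarrow> (\<forall>c<d.
           (\<forall>i\<in>{1..k}. ((\<lambda>s. y i s c) has_real_derivative U i (st k y t) t c) (at t))
         \<and> (\<forall>i\<in>{1..n}. ((\<lambda>s. x i s c) has_real_derivative
               (\<Sum>j\<in>Nset n \<sigma> i t. a i j (st n x t) (st k y t) t * (x j t c - x i t c))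
             + (\<Sum>j\<in>Lset k \<sigma> i t. b i j (st n x t) (st k y t) t * (y j t c - x i t c))
             + W i t c) (at t)))"
        using TE by blast
      interpret S: sys n k d a_lo a_hi Z \<sigma> a b U W x y E
      proof
        show "1 \<le> n" using assms(1) by simp
      qed (use k1 assms(2) abnd bbnd Zb E in auto)
      show "\<forall>t\<in>{t0..t0+Tst}. fdist k d x y m t \<le> \<xi> (t - t0) * hdist n k d x y t0 + \<gamma> * Z + d0"
      proof
        fix t assume t: "t \<in> {t0..t0+Tst}"
        have s2: "fdist k d x y m t' \<le> hdist n k d x y t0 * (\<rho> + (1-\<rho>)*exp(-c*(t'-t0))) + \<gamma>*Z + d0"
          if "t' \<in> {t0..t0+\<tau>D}" for t'
          by (rule S.step2[OF t0 m i assms(4) _ arc fi _ _ _ c_def \<rho>_def])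
             (use assms(5,6,7) d0 gam1 that in auto)
        show "fdist k d x y m t \<le> \<xi> (t - t0) * hdist n k d x y t0 + \<gamma> * Z + d0"
        proof (cases "t - t0 \<le> \<tau>D")
          case True
          then have "fdist k d x y m t \<le> hdist n k d x y t0 * g1 (t - t0) + \<gamma>*Z + d0"
            using s2[of t] t by (simp add: g1_def)
          then show ?thesis using True by (simp add: \<xi>_def mult.commute)
        next
          case False
          have init: "fdist k d x y m (t0+\<tau>D) \<le> hdist n k d x y t0 * g1 \<tau>D + \<gamma>*Z + d0"
            using s2[of "t0+\<tau>D"] assms(4) by (simp add: g1_def)
          have "fdist k d x y m t \<le> hdist n k d x y t0 * (1 - (1 - g1 \<tau>D)*exp(-c2*(t-t0-\<tau>D))) + \<gamma>*Z + d0"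
            by (rule S.step3[OF t0 m _ _ _ c2_def gam2 _ _ init]) (use assms(4,5) d0 gpos g1t False t in auto)
          then show ?thesis using False xi2[of "t - t0"] by (simp add: g2_def mult.commute)
        qed
      qed
    qed
  qed
qed


end
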